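(* Let $\mathcal{I}$ be a suitable and well-separated collection of pairwise disjoint intervals in $\mathbb{R}/2\pi\mathbb{Z}$, and let $\alpha:\mathcal{I}\to\{-1,1\}$ be a symmetric colouring with $\hat\varepsilon\in[-1,1]^{S_o}$. Let $M:=16n$ and $\theta_k:=\frac{(2k-1)\pi}{4M}$ for $k=1,\dots,M$. Then there exists $\varepsilon:S_o\to\{-1,1\}$ such that \[ \big|s_o^{(\ell)}(\theta_k)-\hat s_\alpha^{(\ell)}(\theta_k)\big|\le(65+2\ell)\sqrt{n}\cdot(2n)^\ell \] for every $k\in[M]$ and every integer $\ell\ge0$, where $^{(\ell)}$ denotes the $\ell$-th derivative in $\theta$.
   Context: Standing setup: $n$ is a sufficiently large positive integer, $t$ is an odd integer such that $\gamma:=(2^{t+11}+2^t-1)/n$ satisfies $2^{-43}<\gamma\le2^{-40}$. A collection $\mathcal{I}$ of pairwise disjoint intervals in $\mathbb{R}/2\pi\mathbb{Z}$ is suitable if (a) endpoints of each interval lie in $\frac{\pi}{n}\mathbb{Z}$; (b) $\mathcal{I}$ is invariant under $\theta\mapsto\pi+\theta$ and $\theta\mapsto\pi-\theta$; (c) $|\mathcal{I}|=4N$ for some integer $N\le\gamma n$. It is well-separated if moreover (d) $|I|\le6\pi/n$ for each $I\in\mathcal{I}$; (e) $d(I,J)\ge\pi/n$ for distinct $I,J\in\mathcal{I}$ (distance mod $2\pi$, infimum over points); (f) $\bigcup_{I\in\mathcal{I}}I$ is disjoint from $(\pi/2)\mathbb{Z}+[-100\pi/n,100\pi/n]$. A colouring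 $\alpha:\mathcal{I}\to\{-1,1\}$ is symmetric if $\alpha(I')=\alpha(I)$ whenever $I'=\pi-I$ and $\alpha(I')=-\alpha(I)$ whenever $I'=\pi+I$. Let $S_o:=\{1,3,\dots,2n-1\}$, $K:=2^7$, $g_\alpha(\theta):=\sum_{I\in\mathcal{I}}\alpha(I)\mathbf{1}[\theta\in I]$, $\hat\varepsilon_j:=K\sqrt{n}\int_{-\pi}^{\pi}g_\alpha(\theta)\sin(j\theta)\,d\theta$ for $j\in S_o$, $\hat s_\alpha(\theta):=\sum_{j\in S_o}\hat\varepsilon_j\sin(j\theta)$, and for $\varepsilon:S_o\to\{-1,1\}$, $s_o(\theta):=\sum_{j\in S_o}\varepsilon_j\sin(j\theta)$. *)

theory Defs
  imports "HOL-Analysis.Analysis"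
begin

text \<open>An interval (arc) of the circle R/2piZ, represented as a 2pi-periodic subset of R:
  the image of the closed real interval [a,b] under the quotient map.\<close>
definition arc :: "real \<Rightarrow> real \<Rightarrow> real set" where
  "arc a b = {\<theta>. \<exists>k::int. a \<le> \<theta> + 2*pi*k \<and> \<theta> + 2*pi*k \<le> b}"

definition gamma :: "nat \<Rightarrow> int \<Rightarrow> real" where
  "gamma n t = (2 powr (t+11) + 2 powr t - 1) / real n"

definition So :: "nat \<Rightarrow> nat set" where
  "So n = {j. odd j \<and> j < 2*n}"

definition Kc :: real where "Kc = 2^7"

definition suitable :: "nat \<Rightarrow> int \<Rightarrow> real set set \<Rightarrow> bool" where
  "suitable n t \<I> \<longleftrightarrow>
     finite \<I> \<and>
     (\<forall>I\<in>\<I>. \<exists>p q::int. p \<le> q \<and> q - p < 2 * int n \<and> I = arc (p*pi/n) (q*pi/n)) \<and>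
     (\<forall>I\<in>\<I>. \<forall>J\<in>\<I>. I \<noteq> J \<longrightarrow> I \<inter> J = {}) \<and>
     (\<forall>I\<in>\<I>. (\<lambda>\<theta>. pi + \<theta>) ` I \<in> \<I> \<and> (\<lambda>\<theta>. pi - \<theta>) ` I \<in> \<I>) \<and>
     (\<exists>N::nat. card \<I> = 4*N \<and> real N \<le> gamma n t * real n)"

text \<open>Since the sets are 2pi-periodic,
  the distance mod 2pi is the infimum of |x-y| over x\<in>I, y\<in>J.\<close>
definition well_separated :: "nat \<Rightarrow> int \<Rightarrow> real set set \<Rightarrow> bool" where
  "well_separated n t \<I> \<longleftrightarrow>
     suitable n t \<I> \<and>
     (\<forall>I\<in>\<I>. \<exists>p q::int. p \<le> q \<and> q - p \<le> 6 \<and> I = arc (p*pi/n) (q*pi/n)) \<and>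
     (\<forall>I\<in>\<I>. \<forall>J\<in>\<I>. I \<noteq> J \<longrightarrow> (\<forall>x\<in>I. \<forall>y\<in>J. \<bar>x - y\<bar> \<ge> pi/n)) \<and>
     (\<forall>I\<in>\<I>. \<forall>\<theta>\<in>I. \<forall>m::int. \<bar>\<theta> - m*pi/2\<bar> > 100*pi/n)"

definition symmetric_colouring :: "real set set \<Rightarrow> (real set \<Rightarrow> real) \<Rightarrow> bool" where
  "symmetric_colouring \<I> \<alpha> \<longleftrightarrow>
     (\<forall>I\<in>\<I>. \<alpha> I \<in> {-1, 1}) \<and>
     (\<forall>I\<in>\<I>. \<forall>I'\<in>\<I>. I' = (\<lambda>\<theta>. pi - \<theta>) ` I \<longrightarrow> \<alpha> I' = \<alpha> I) \<and>
     (\<forall>I\<in>\<I>. \<forall>I'\<in>\<I>. I' = (\<lambda>\<theta>. pi + \<theta>) ` I \<longrightarrow> \<alpha> I' = - \<alpha> I)"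

definition g_alpha :: "real set set \<Rightarrow> (real set \<Rightarrow> real) \<Rightarrow> real \<Rightarrow> real" where
  "g_alpha \<I> \<alpha> \<theta> = (\<Sum>I\<in>\<I>. \<alpha> I * indicator I \<theta>)"

definition eps_hat :: "nat \<Rightarrow> real set set \<Rightarrow> (real set \<Rightarrow> real) \<Rightarrow> nat \<Rightarrow> real" where
  "eps_hat n \<I> \<alpha> j = Kc * sqrt n * integral {-pi..pi} (\<lambda>\<theta>. g_alpha \<I> \<alpha> \<theta> * sin (real j * \<theta>))"

definition s_hat :: "nat \<Rightarrow> real set set \<Rightarrow> (real set \<Rightarrow> real) \<Rightarrow> real \<Rightarrow> real" where
  "s_hat n \<I> \<alpha> \<theta> = (\<Sum>j\<in>So n. eps_hat n \<I> \<alpha> j * sin (real j * \<theta>))"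

definition s_o :: "nat \<Rightarrow> (nat \<Rightarrow> real) \<Rightarrow> real \<Rightarrow> real" where
  "s_o n \<epsilon> \<theta> = (\<Sum>j\<in>So n. \<epsilon> j * sin (real j * \<theta>))"

end

theory Submission
  imports Defs "HOL-Probability.Hoeffding"
begin
definition cols :: "nat set \<Rightarrow> (nat \<Rightarrow> real) set" where
  "cols U = PiE U (\<lambda>_. {-1, 1})"

lemma cosh_bound: "exp (u::real) + exp (-u) \<le> 2 * exp (u^2/2)"
proof -
  define h where "h = 2*\<bar>u\<bar>"
  have h0: "h \<ge> 0" by (simp add: h_def)
  have H: "ln (1 + (1/2) * (exp h - 1)) \<le> h^2/8 + h/2"
    using Hoeffdings_lemma_aux[of h "1/2", OF h0] by linarith
  have e1: "(1+exp h)/2 = 1 + (1/2) * (exp h - 1)" by (simp add: field_simps)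
  have e2: "h^2/8 + h/2 = u^2/2 + \<bar>u\<bar>" by (simp add: h_def power2_eq_square)
  have "ln ((1 + exp h)/2) \<le> u^2/2 + \<bar>u\<bar>" using H unfolding e1 e2 .
  hence "(1 + exp h)/2 \<le> exp (u^2/2 + \<bar>u\<bar>)"
    by (smt (verit) exp_gt_zero exp_le_cancel_iff exp_ln)
  hence "(1 + exp h)/2 * exp (-\<bar>u\<bar>) \<le> exp (u^2/2 + \<bar>u\<bar>) * exp (-\<bar>u\<bar>)"
    by (intro mult_right_mono) auto
  hence "(exp (-\<bar>u\<bar>) + exp (\<bar>u\<bar>))/2 \<le> exp (u^2/2)"
    by (simp add: h_def algebra_simps flip: exp_add)
  thus ?thesis by (cases "u \<ge> 0") (auto simp: algebra_simps)
qed

lemma card_cols: "finite U \<Longrightarrow> card (cols U) = 2 ^ card U"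
  by (simp add: cols_def card_PiE numeral_2_eq_2)

lemma finite_cols: "finite U \<Longrightarrow> finite (cols U)"
  by (simp add: cols_def finite_PiE)

lemma mgf_bound:
  assumes "finite U" "\<forall>j\<in>U. \<bar>a j\<bar> \<le> 1"
  shows "(\<Sum>x\<in>cols U. exp (\<mu> * (\<Sum>j\<in>U. a j * x j))) \<le> 2 ^ card U * exp (\<mu>^2 * card U / 2)"
proof -
  have "(\<Sum>x\<in>cols U. exp (\<mu> * (\<Sum>j\<in>U. a j * x j))) = (\<Sum>x\<in>cols U. \<Prod>j\<in>U. exp (\<mu> * a j * x j))"
    using assms(1) by (simp add: sum_distrib_left exp_sum mult.assoc)
  also have "\<dots> = (\<Prod>j\<in>U. \<Sum>s\<in>{-1,1::real}. exp (\<mu> * a j * s))"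
    unfolding cols_def by (rule prod_sum_PiE[symmetric]) (use assms in auto)
  also have "\<dots> \<le> (\<Prod>j\<in>U. 2 * exp (\<mu>^2/2))"
  proof (rule prod_mono, safe)
    fix j assume j: "j \<in> U"
    have "(\<Sum>s\<in>{-1,1::real}. exp (\<mu> * a j * s)) = exp (\<mu> * a j) + exp (-(\<mu> * a j))" by simp
    also have "\<dots> \<le> 2 * exp ((\<mu> * a j)^2/2)" by (rule cosh_bound)
    also have "(\<mu> * a j)^2 \<le> \<mu>^2"
    proof -
      have "\<bar>a j\<bar>^2 \<le> 1^2" using assms(2) j by (intro power_mono) auto
      hence "(a j)^2 \<le> 1" by simp
      hence "\<mu>^2 * (a j)^2 \<le> \<mu>^2 * 1" by (intro mult_left_mono) auto
      thus ?thesis by (simp add: power_mult_distrib)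
    qed
    hence "2 * exp ((\<mu> * a j)^2/2) \<le> 2 * exp (\<mu>^2/2)" by simp
    finally show "(\<Sum>s\<in>{-1,1::real}. exp (\<mu> * a j * s)) \<le> 2 * exp (\<mu>^2/2)" .
    show "0 \<le> (\<Sum>s\<in>{-1,1::real}. exp (\<mu> * a j * s))" by (intro sum_nonneg) auto
  qed
  also have "\<dots> = 2 ^ card U * exp (\<mu>^2 * card U / 2)"
    by (simp add: power_mult_distrib exp_of_nat_mult[symmetric] algebra_simps flip: power_mult_distrib)
  finally show ?thesis .
qed

lemma tail_one:
  assumes "finite U" "\<forall>j\<in>U. \<bar>a j\<bar> \<le> 1" "card U > 0" "t \<ge> 0"
  shows "card {x\<in>cols U. t \<le> (\<Sum>j\<in>U. a j * x j)} \<le> 2 ^ card U * exp (-(t^2) / (2 * real (card U)))"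
proof -
  define m where "m = real (card U)"
  have m: "m > 0" using assms m_def by simp
  define \<mu> where "\<mu> = t / m"
  have mu: "\<mu> \<ge> 0" using assms m by (simp add: \<mu>_def)
  let ?S = "{x\<in>cols U. t \<le> (\<Sum>j\<in>U. a j * x j)}"
  have fin: "finite (cols U)" using assms finite_cols by auto
  have "card ?S * exp (\<mu> * t) = (\<Sum>x\<in>?S. exp (\<mu> * t))" by simp
  also have "\<dots> \<le> (\<Sum>x\<in>?S. exp (\<mu> * (\<Sum>j\<in>U. a j * x j)))"
    by (intro sum_mono) (use mu in \<open>auto intro: mult_left_mono\<close>)
  also have "\<dots> \<le> (\<Sum>x\<in>cols U. exp (\<mu> * (\<Sum>j\<in>U. a j * x j)))"
    by (intro sum_mono2 fin) auto
  also have "\<dots> \<le> 2 ^ card U * exp (\<mu>^2 * m / 2)"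
    using mgf_bound[OF assms(1,2)] m_def by simp
  finally have *: "card ?S * exp (\<mu> * t) \<le> 2 ^ card U * exp (\<mu>^2 * m / 2)" .
  have "card ?S = card ?S * exp (\<mu> * t) * exp (-(\<mu> * t))" by (simp flip: exp_add)
  also have "\<dots> \<le> 2 ^ card U * exp (\<mu>^2 * m / 2) * exp (-(\<mu> * t))"
    by (intro mult_right_mono *) auto
  also have "\<dots> = 2 ^ card U * exp (\<mu>^2 * m / 2 - \<mu> * t)" by (simp add: mult.assoc flip: exp_add)
  also have "\<mu>^2 * m / 2 - \<mu> * t = -(t^2) / (2 * m)"
    using m by (simp add: \<mu>_def field_simps power2_eq_square)
  finally show ?thesis by (simp add: m_def)
qed

lemma tail_abs:
  assumes "finite U" "\<forall>j\<in>U. \<bar>a j\<bar> \<le> 1" "card U > 0" "t \<ge> 0"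
  shows "card {x\<in>cols U. t \<le> \<bar>\<Sum>j\<in>U. a j * x j\<bar>} \<le> 2 * 2 ^ card U * exp (-(t^2) / (2 * real (card U)))"
proof -
  have neg: "\<forall>j\<in>U. \<bar>- a j\<bar> \<le> 1" using assms by simp
  have "{x\<in>cols U. t \<le> \<bar>\<Sum>j\<in>U. a j * x j\<bar>} \<subseteq>
     {x\<in>cols U. t \<le> (\<Sum>j\<in>U. a j * x j)} \<union> {x\<in>cols U. t \<le> (\<Sum>j\<in>U. (- a j) * x j)}"
  proof
    fix x assume "x \<in> {x\<in>cols U. t \<le> \<bar>\<Sum>j\<in>U. a j * x j\<bar>}"
    moreover have "(\<Sum>j\<in>U. (- a j) * x j) = - (\<Sum>j\<in>U. a j * x j)" by (simp add: sum_negf)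
    ultimately show "x \<in> {x\<in>cols U. t \<le> (\<Sum>j\<in>U. a j * x j)} \<union> {x\<in>cols U. t \<le> (\<Sum>j\<in>U. (- a j) * x j)}"
      by (cases "(\<Sum>j\<in>U. a j * x j) \<ge> 0") auto
  qed
  hence "card {x\<in>cols U. t \<le> \<bar>\<Sum>j\<in>U. a j * x j\<bar>} \<le> card ({x\<in>cols U. t \<le> (\<Sum>j\<in>U. a j * x j)} \<union> {x\<in>cols U. t \<le> (\<Sum>j\<in>U. (- a j) * x j)})"
    by (intro card_mono) (auto intro: rev_finite_subset[OF finite_cols[OF assms(1)]])
  also have "\<dots> \<le> card {x\<in>cols U. t \<le> (\<Sum>j\<in>U. a j * x j)} + card {x\<in>cols U. t \<le> (\<Sum>j\<in>U. (- a j) * x j)}"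
    by (rule card_Un_le)
  finally have "real (card {x\<in>cols U. t \<le> \<bar>\<Sum>j\<in>U. a j * x j\<bar>}) \<le> real (card {x\<in>cols U. t \<le> (\<Sum>j\<in>U. a j * x j)}) + real (card {x\<in>cols U. t \<le> (\<Sum>j\<in>U. (- a j) * x j)})"
    by linarith
  also have "\<dots> \<le> 2 ^ card U * exp (-(t^2) / (2 * real (card U))) + 2 ^ card U * exp (-(t^2) / (2 * real (card U)))"
    by (intro add_mono tail_one assms neg)
  finally show ?thesis by simp
qed

lemma binom_tail:
  assumes "\<forall>i<k. real i < real m / 3"
  shows "(\<Sum>i<k. real (m choose i)) \<le> (3/2)^m * 2 powr (real m / 3)"
proof -
  define f where "f i = real (m choose i) * (1/3)^i * (2/3)^(m-i)" for i
  have le: "real (m choose i) * ((2/3)^m / 2 powr (real m / 3)) \<le> f i" if "i < k" for i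
  proof -
    have im: "i \<le> m" using assms that by fastforce
    have eq: "(1/3::real)^i * (2/3)^(m-i) = (2/3)^m / 2^i"
    proof -
      have "(2/3::real)^m = (2/3)^i * (2/3)^(m-i)" using im by (simp flip: power_add)
      moreover have "(2/3::real)^i = (1/3)^i * 2^i" by (simp flip: power_mult_distrib)
      ultimately show ?thesis by (simp add: field_simps)
    qed
    have ii: "real i \<le> real m / 3" using assms that by (meson less_imp_le)
    have "(2::real)^i = 2 powr real i" by (simp add: powr_realpow)
    also have "\<dots> \<le> 2 powr (real m/3)" using ii by (intro powr_mono) auto
    finally have "(2::real)^i \<le> 2 powr (real m/3)" .
    hence ineq: "(2/3::real)^m / 2 powr (real m / 3) \<le> (2/3)^m / 2^i"
      by (intro divide_left_mono) auto
    have "real (m choose i) * ((2/3)^m / 2 powr (real m / 3)) \<le> real (m choose i) * ((2/3)^m / 2^i)"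
      using ineq by (intro mult_left_mono) auto
    thus ?thesis using eq unfolding f_def by (simp only: mult.assoc)
  qed
  have "(\<Sum>i<k. real (m choose i)) * ((2/3)^m / 2 powr (real m / 3)) = (\<Sum>i<k. real (m choose i) * ((2/3)^m / 2 powr (real m / 3)))"
    by (rule sum_distrib_right)
  also have "\<dots> \<le> (\<Sum>i<k. f i)" by (intro sum_mono le) auto
  also have "\<dots> \<le> (\<Sum>i\<le>m. f i)"
  proof (rule sum_mono2)
    show "{..<k} \<subseteq> {..m}"
    proof
      fix i assume "i \<in> {..<k}"
      hence "real i < real m / 3" using assms by auto
      hence "real i \<le> real m" by linarith
      thus "i \<in> {..m}" by simp
    qed
  qed (auto simp: f_def)
  also have "\<dots> = (1/3 + 2/3::real)^m" by (subst binomial_ring) (simp only: f_def[abs_def])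
  also have "\<dots> = 1" by simp
  finally have "(\<Sum>i<k. real (m choose i)) * ((2/3)^m / 2 powr (real m / 3)) \<le> 1" .
  hence "(\<Sum>i<k. real (m choose i)) \<le> 1 / ((2/3)^m / 2 powr (real m / 3))"
    by (simp add: field_simps)
  also have "\<dots> = (3/2)^m * 2 powr (real m / 3)" by (simp add: field_simps power_divide)
  finally show ?thesis .
qed

lemma ball_bound:
  assumes "finite U" "x0 \<in> cols U"
  shows "real (card {y\<in>cols U. real (card {j\<in>U. y j \<noteq> x0 j}) < real (card U) / 3})
           \<le> (3/2)^card U * 2 powr (real (card U) / 3)"
proof -
  define m where "m = card U"
  define k where "k = nat \<lceil>real m / 3\<rceil>"
  have kk: "\<forall>i<k. real i < real m / 3"
  proof (intro allI impI)
    fix i assume "i < k"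
    hence "int i < \<lceil>real m / 3\<rceil>" by (simp add: k_def)
    thus "real i < real m / 3" by (simp add: less_ceiling_iff)
  qed
  let ?N = "{y\<in>cols U. real (card {j\<in>U. y j \<noteq> x0 j}) < real (card U) / 3}"
  define D where "D y = {j\<in>U. y j \<noteq> x0 j}" for y :: "nat \<Rightarrow> real"
  have inj: "inj_on D ?N"
  proof
    fix y1 y2 assume y1: "y1 \<in> ?N" and y2: "y2 \<in> ?N" and eq: "D y1 = D y2"
    show "y1 = y2"
    proof
      fix j show "y1 j = y2 j"
      proof (cases "j \<in> U")
        case True
        have v: "y1 j \<in> {-1,1}" "y2 j \<in> {-1,1}" "x0 j \<in> {-1,1}"
          using y1 y2 assms(2) True by (auto simp: cols_def)
        have "(y1 j \<noteq> x0 j) = (y2 j \<noteq> x0 j)" using eq True unfolding D_def by blast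
        thus ?thesis using v by auto
      next
        case False thus ?thesis using y1 y2 by (auto simp: cols_def PiE_def extensional_def)
      qed
    qed
  qed
  have sub: "D ` ?N \<subseteq> (\<Union>i<k. {A. A \<subseteq> U \<and> card A = i})"
  proof
    fix A assume "A \<in> D ` ?N"
    then obtain y where y: "y \<in> ?N" "A = D y" by blast
    have "real (card A) < real m / 3" using y by (simp add: D_def m_def)
    hence "card A < k" unfolding k_def by linarith
    thus "A \<in> (\<Union>i<k. {A. A \<subseteq> U \<and> card A = i})" using y by (auto simp: D_def)
  qed
  have "card ?N = card (D ` ?N)" using inj by (simp add: card_image)
  also have "\<dots> \<le> card (\<Union>i<k. {A. A \<subseteq> U \<and> card A = i})"
    by (intro card_mono sub) (use assms(1) in auto)
  also have "\<dots> \<le> (\<Sum>i<k. card {A. A \<subseteq> U \<and> card A = i})" by (rule card_UN_le) auto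
  also have "\<dots> = (\<Sum>i<k. m choose i)" using assms(1) by (simp add: n_subsets m_def)
  finally have "real (card ?N) \<le> (\<Sum>i<k. real (m choose i))" by (simp flip: of_nat_sum)
  also have "\<dots> \<le> (3/2)^m * 2 powr (real m / 3)" by (rule binom_tail[OF kk])
  finally show ?thesis by (simp add: m_def)
qed

definition hcost :: "real \<Rightarrow> real" where "hcost y = exp (-y) * (2*y + 8)"

definition wt :: "real \<Rightarrow> int \<Rightarrow> real" where
  "wt y v = (if v = 0 then - ln (1 - 2*exp (-y)) else y + real (nat \<bar>v\<bar>) * ln 2)"

definition bucket :: "nat set \<Rightarrow> (nat \<Rightarrow> real) \<Rightarrow> real \<Rightarrow> (nat \<Rightarrow> real) \<Rightarrow> int" where
  "bucket U a \<Delta> x = \<lfloor>(\<Sum>j\<in>U. a j * x j) / (2*\<Delta>) + 1/2\<rfloor>"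

lemma exp_neg_le_quarter: "(y::real) \<ge> 2 \<Longrightarrow> exp (-y) \<le> 1/4"
proof -
  assume y: "y \<ge> 2"
  have "(1 + 2 / real 2)^2 \<le> exp (2::real)" by (rule exp_ge_one_plus_x_over_n_power_n) auto
  hence "4 \<le> exp (2::real)" by simp
  also have "exp 2 \<le> exp y" using y by simp
  finally have "4 \<le> exp y" .
  thus ?thesis by (simp add: exp_minus field_simps)
qed

lemma exp_wt:
  assumes "v \<noteq> 0" shows "exp (- wt y v) = exp (-y) / 2 ^ nat \<bar>v\<bar>"
proof -
  have e: "exp (real (nat \<bar>v\<bar>) * ln 2) = 2 ^ nat \<bar>v\<bar>" by (simp only: exp_of_nat_mult) simp
  have "- wt y v = -y - real (nat \<bar>v\<bar>) * ln 2" using assms by (simp add: wt_def)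
  hence "exp (- wt y v) = exp (-y) / exp (real (nat \<bar>v\<bar>) * ln 2)" by (simp only: exp_diff)
  thus ?thesis using e by simp
qed

lemma kraft_sum:
  assumes "y \<ge> 2"
  shows "(\<Sum>v\<in>{-int R..int R}. exp (- wt y v)) = 1 - 2 * exp (-y) * (1/2)^R"
proof (induction R)
  case 0
  have "2 * exp (-y) < 1" using exp_neg_le_quarter[OF assms] by simp
  thus ?case by (simp add: wt_def)
next
  case (Suc R)
  have set: "{-int (Suc R)..int (Suc R)} = insert (int R + 1) (insert (-(int R + 1)) {-int R..int R})"
    by auto
  have "(\<Sum>v\<in>{-int (Suc R)..int (Suc R)}. exp (- wt y v)) =
        exp (- wt y (int R + 1)) + exp (- wt y (-(int R + 1))) + (\<Sum>v\<in>{-int R..int R}. exp (- wt y v))"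
    unfolding set by (subst sum.insert; simp)+
  also have "exp (- wt y (int R + 1)) = exp (-y) / 2^(nat \<bar>int R + 1\<bar>)"
    by (rule exp_wt) simp
  also have "nat \<bar>int R + 1\<bar> = Suc R" by (simp add: nat_add_distrib)
  also have "exp (- wt y (-(int R + 1))) = exp (-y) / 2^(nat \<bar>-(int R + 1)\<bar>)"
    by (rule exp_wt) simp
  also have "nat \<bar>-(int R + 1)\<bar> = Suc R" by (simp add: nat_add_distrib)
  finally show ?case using Suc.IH by (simp add: field_simps power_divide)
qed

lemma kraft_le:
  assumes "y \<ge> 2"
  shows "(\<Sum>v\<in>{-int R..int R}. exp (- wt y v)) \<le> 1"
  using kraft_sum[OF assms, of R] by simp

lemma dot_abs_le:
  assumes "finite U" "\<forall>j\<in>U. \<bar>a j\<bar> \<le> 1" "x \<in> cols U"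
  shows "\<bar>\<Sum>j\<in>U. a j * x j\<bar> \<le> real (card U)"
proof -
  have "\<bar>\<Sum>j\<in>U. a j * x j\<bar> \<le> (\<Sum>j\<in>U. \<bar>a j * x j\<bar>)" by (rule sum_abs)
  also have "\<dots> \<le> (\<Sum>j\<in>U. 1)"
  proof (intro sum_mono)
    fix j assume j: "j \<in> U"
    have "x j \<in> {-1,1}" using assms(3) j by (auto simp: cols_def PiE_iff)
    hence "\<bar>x j\<bar> = 1" by auto
    thus "\<bar>a j * x j\<bar> \<le> 1" using assms(2) j by (simp add: abs_mult)
  qed
  finally show ?thesis by simp
qed

lemma bucket_big:
  assumes "\<Delta> > 0" "v \<ge> 1" "v \<le> \<bar>bucket U a \<Delta> x\<bar>"
  shows "(2 * real_of_int v - 1) * \<Delta> \<le> \<bar>\<Sum>j\<in>U. a j * x j\<bar>"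
proof -
  define d where "d = (\<Sum>j\<in>U. a j * x j)"
  define b where "b = bucket U a \<Delta> x"
  have b: "b = \<lfloor>d / (2*\<Delta>) + 1/2\<rfloor>" by (simp add: b_def d_def bucket_def)
  show ?thesis
  proof (cases "b \<ge> 0")
    case True
    hence "v \<le> b" using assms(3) b_def by simp
    hence "real_of_int v \<le> d / (2*\<Delta>) + 1/2" using b by linarith
    hence "2 * real_of_int v - 1 \<le> d / \<Delta>" by (simp add: field_simps)
    hence "(2 * real_of_int v - 1) * \<Delta> \<le> d" using assms(1) by (simp add: field_simps)
    thus ?thesis unfolding d_def using abs_ge_self[of "\<Sum>j\<in>U. a j * x j"] by linarith
  next
    case False
    hence "b \<le> -v" using assms(3) b_def by simp
    hence "d / (2*\<Delta>) + 1/2 < 1 - real_of_int v" using b by linarith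
    hence "d / \<Delta> < 1 - 2 * real_of_int v" by (simp add: field_simps)
    hence "d < (1 - 2 * real_of_int v) * \<Delta>" using assms(1) by (simp add: field_simps)
    moreover have "(1 - 2 * real_of_int v) * \<Delta> = - ((2 * real_of_int v - 1) * \<Delta>)" by (simp add: algebra_simps)
    ultimately show ?thesis unfolding d_def using abs_ge_minus_self[of "\<Sum>j\<in>U. a j * x j"] by linarith
  qed
qed

lemma bucket_range:
  assumes "finite U" "\<forall>j\<in>U. \<bar>a j\<bar> \<le> 1" "x \<in> cols U" "\<Delta> > 0"
  shows "\<bar>bucket U a \<Delta> x\<bar> \<le> int (nat \<lceil>real (card U) / (2*\<Delta>)\<rceil> + 1)"
proof -
  define d where "d = (\<Sum>j\<in>U. a j * x j)"
  have d: "\<bar>d\<bar> \<le> real (card U)" using dot_abs_le[OF assms(1-3)] by (simp add: d_def)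
  have "\<bar>d / (2*\<Delta>)\<bar> \<le> real (card U) / (2*\<Delta>)"
    using d assms(4) by (simp add: abs_divide divide_right_mono)
  moreover have "real (card U) / (2*\<Delta>) \<le> of_int \<lceil>real (card U) / (2*\<Delta>)\<rceil>" by (rule le_of_int_ceiling)
  moreover have "\<lceil>real (card U) / (2*\<Delta>)\<rceil> \<ge> 0"
  proof -
    have "0 \<le> real (card U) / (2*\<Delta>)" using assms(4) by simp
    hence "\<lceil>0::real\<rceil> \<le> \<lceil>real (card U) / (2*\<Delta>)\<rceil>" by (rule ceiling_mono)
    thus ?thesis by simp
  qed
  ultimately show ?thesis unfolding bucket_def d_def[symmetric] by linarith
qed

lemma abs_as_sum:
  fixes b :: int
  assumes "\<bar>b\<bar> \<le> int R"
  shows "real_of_int \<bar>b\<bar> = (\<Sum>i<R. if int i + 1 \<le> \<bar>b\<bar> then 1 else 0)"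
proof -
  have "{..<R} \<inter> {i. int i + 1 \<le> \<bar>b\<bar>} = {..<nat \<bar>b\<bar>}" using assms by auto
  hence "(\<Sum>i<R. if int i + 1 \<le> \<bar>b\<bar> then 1 else (0::real)) = real (card {..<nat \<bar>b\<bar>})"
    by (simp add: sum.If_cases)
  thus ?thesis by simp
qed

lemma cost_bound:
  assumes U: "finite U" "card U > 0" and a: "\<forall>j\<in>U. \<bar>a j\<bar> \<le> 1" and D: "\<Delta> > 0"
    and y: "y = \<Delta>^2 / (2 * real (card U))" "y \<ge> 2"
  shows "(\<Sum>x\<in>cols U. wt y (bucket U a \<Delta> x)) \<le> 2 ^ card U * hcost y"
proof -
  define m where "m = card U"
  define X where "X = cols U"
  define e where "e = exp (-y)"
  define \<rho> where "\<rho> = 2 * e"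
  define R where "R = nat \<lceil>real m / (2*\<Delta>)\<rceil> + 1"
  define b where "b x = bucket U a \<Delta> x" for x
  have finX: "finite X" using U by (simp add: X_def finite_cols)
  have cardX: "real (card X) = 2 ^ m" using U by (simp add: X_def m_def card_cols)
  have e4: "e \<le> 1/4" using exp_neg_le_quarter[OF y(2)] by (simp add: e_def)
  have e0: "e > 0" by (simp add: e_def)
  have rho: "0 \<le> \<rho>" "\<rho> \<le> 1/2" using e4 e0 by (auto simp: \<rho>_def)
  have ln2: "ln (2::real) \<le> 1" using ln_2_less_1 by simp
  have ln2': "0 \<le> ln (2::real)" by simp
  have brange: "\<bar>b x\<bar> \<le> int R" if "x \<in> X" for x
    using bucket_range[OF U(1) a _ D, of x] that by (simp add: b_def R_def X_def m_def)
  have pw: "wt y (b x) \<le> 2*\<rho> + (if b x \<noteq> 0 then y else 0) + ln 2 * real_of_int \<bar>b x\<bar>" for x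
  proof (cases "b x = 0")
    case True
    have "- \<rho> - 2 * \<rho>^2 \<le> ln (1 - \<rho>)" using ln_one_minus_pos_lower_bound rho by blast
    moreover have "2 * \<rho>^2 \<le> \<rho>" using mult_right_mono[of "2*\<rho>" 1 \<rho>] rho by (simp add: power2_eq_square)
    ultimately have "- ln (1 - \<rho>) \<le> 2 * \<rho>" by linarith
    thus ?thesis using True by (simp add: wt_def \<rho>_def e_def)
  next
    case False
    have "real (nat \<bar>b x\<bar>) = real_of_int \<bar>b x\<bar>" by simp
    thus ?thesis using False rho by (simp add: wt_def mult.commute)
  qed
  have "(\<Sum>x\<in>X. wt y (b x)) \<le> (\<Sum>x\<in>X. 2*\<rho> + (if b x \<noteq> 0 then y else 0) + ln 2 * real_of_int \<bar>b x\<bar>)"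
    by (intro sum_mono pw)
  also have "\<dots> = 2^m * (2*\<rho>) + y * real (card {x\<in>X. b x \<noteq> 0}) + ln 2 * (\<Sum>x\<in>X. real_of_int \<bar>b x\<bar>)"
  proof -
    have "(\<Sum>x\<in>X. (if b x \<noteq> 0 then y else 0)) = (\<Sum>x\<in>{x\<in>X. b x \<noteq> 0}. y)"
      using finX by (rule sum.inter_filter[symmetric])
    also have "\<dots> = y * real (card {x\<in>X. b x \<noteq> 0})" by simp
    finally have 1: "(\<Sum>x\<in>X. (if b x \<noteq> 0 then y else 0)) = y * real (card {x\<in>X. b x \<noteq> 0})" .
    have 2: "(\<Sum>x\<in>X. 2*\<rho>) = 2^m * (2*\<rho>)" using cardX by simp
    show ?thesis by (simp only: sum.distrib 1 2 sum_distrib_left)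
  qed
  also have "real (card {x\<in>X. b x \<noteq> 0}) \<le> 2 * 2^m * e"
  proof -
    have "{x\<in>X. b x \<noteq> 0} \<subseteq> {x\<in>cols U. \<Delta> \<le> \<bar>\<Sum>j\<in>U. a j * x j\<bar>}"
    proof safe
      fix x assume "x \<in> X" "b x \<noteq> 0"
      thus "x \<in> cols U" by (simp add: X_def)
      have "(2 * real_of_int 1 - 1) * \<Delta> \<le> \<bar>\<Sum>j\<in>U. a j * x j\<bar>"
        by (rule bucket_big[OF D]) (use \<open>b x \<noteq> 0\<close> in \<open>auto simp: b_def\<close>)
      thus "\<Delta> \<le> \<bar>\<Sum>j\<in>U. a j * x j\<bar>" by simp
    qed
    hence "card {x\<in>X. b x \<noteq> 0} \<le> card {x\<in>cols U. \<Delta> \<le> \<bar>\<Sum>j\<in>U. a j * x j\<bar>}"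
      by (intro card_mono) (use U in \<open>auto simp: finite_cols\<close>)
    hence "real (card {x\<in>X. b x \<noteq> 0}) \<le> real (card {x\<in>cols U. \<Delta> \<le> \<bar>\<Sum>j\<in>U. a j * x j\<bar>})" by simp
    also have "\<dots> \<le> 2 * 2 ^ card U * exp (-(\<Delta>^2) / (2 * real (card U)))"
      by (rule tail_abs[OF U(1) a U(2)]) (use D in simp)
    also have "-(\<Delta>^2) / (2 * real (card U)) = -y" using y(1) by simp
    finally show ?thesis by (simp add: e_def m_def)
  qed
  hence "y * real (card {x\<in>X. b x \<noteq> 0}) \<le> y * (2 * 2^m * e)" using y(2) by (intro mult_left_mono) auto
  also have "(\<Sum>x\<in>X. real_of_int \<bar>b x\<bar>) \<le> 4 * 2^m * e"
  proof -
    have "(\<Sum>x\<in>X. real_of_int \<bar>b x\<bar>) = (\<Sum>x\<in>X. \<Sum>i<R. if int i + 1 \<le> \<bar>b x\<bar> then 1 else 0)"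
      by (intro sum.cong refl abs_as_sum brange)
    also have "\<dots> = (\<Sum>i<R. \<Sum>x\<in>X. if int i + 1 \<le> \<bar>b x\<bar> then 1 else 0)" by (rule sum.swap)
    also have "\<dots> = (\<Sum>i<R. real (card {x\<in>X. int i + 1 \<le> \<bar>b x\<bar>}))"
      using finX by (intro sum.cong refl) (simp add: sum.inter_filter[symmetric])
    also have "\<dots> \<le> (\<Sum>i<R. 2 * 2^m * e * (1/2)^i)"
    proof (intro sum_mono)
      fix i assume "i \<in> {..<R}"
      have "{x\<in>X. int i + 1 \<le> \<bar>b x\<bar>} \<subseteq> {x\<in>cols U. (2 * real i + 1) * \<Delta> \<le> \<bar>\<Sum>j\<in>U. a j * x j\<bar>}"
      proof safe
        fix x assume "x \<in> X" "int i + 1 \<le> \<bar>b x\<bar>"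
        thus "x \<in> cols U" by (simp add: X_def)
        have "(2 * real_of_int (int i + 1) - 1) * \<Delta> \<le> \<bar>\<Sum>j\<in>U. a j * x j\<bar>"
          by (rule bucket_big[OF D]) (use \<open>int i + 1 \<le> \<bar>b x\<bar>\<close> in \<open>auto simp: b_def\<close>)
        thus "(2 * real i + 1) * \<Delta> \<le> \<bar>\<Sum>j\<in>U. a j * x j\<bar>" by (simp add: algebra_simps)
      qed
      hence "card {x\<in>X. int i + 1 \<le> \<bar>b x\<bar>} \<le> card {x\<in>cols U. (2 * real i + 1) * \<Delta> \<le> \<bar>\<Sum>j\<in>U. a j * x j\<bar>}"
        by (intro card_mono) (use U in \<open>auto simp: finite_cols\<close>)
      hence "real (card {x\<in>X. int i + 1 \<le> \<bar>b x\<bar>}) \<le> real (card {x\<in>cols U. (2 * real i + 1) * \<Delta> \<le> \<bar>\<Sum>j\<in>U. a j * x j\<bar>})" by simp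
      also have "\<dots> \<le> 2 * 2 ^ card U * exp (-(((2 * real i + 1) * \<Delta>)^2) / (2 * real (card U)))"
        by (rule tail_abs[OF U(1) a U(2)]) (use D in simp)
      also have "-(((2 * real i + 1) * \<Delta>)^2) / (2 * real (card U)) = - ((2 * real i + 1)^2 * y)"
        using y(1) by (simp add: power_mult_distrib)
      also have "exp (- ((2 * real i + 1)^2 * y)) \<le> e * (1/2)^i"
      proof -
        have "(2 * real i + 1)^2 * y = y + (4 * real i + 4 * real i ^ 2) * y"
          by (simp add: power2_eq_square algebra_simps)
        moreover have "(4 * real i + 4 * real i ^ 2) * y \<ge> (4 * real i) * 2"
        proof -
          have "(4 * real i + 4 * real i ^ 2) * y \<ge> (4 * real i) * y" using y(2) by (intro mult_right_mono) auto
          moreover have "(4 * real i) * y \<ge> (4 * real i) * 2" using y(2) by (intro mult_left_mono) auto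
          ultimately show ?thesis by linarith
        qed
        moreover have "real i * ln 2 \<le> real i" using ln2 by (simp add: mult_left_le)
        ultimately have "- ((2 * real i + 1)^2 * y) \<le> -y - real i * ln 2" by linarith
        hence "exp (- ((2 * real i + 1)^2 * y)) \<le> exp (-y - real i * ln 2)" by simp
        also have "\<dots> = e / 2^i" by (simp add: e_def exp_diff exp_of_nat_mult mult.commute)
        finally show ?thesis by (simp add: power_divide)
      qed
      finally show "real (card {x\<in>X. int i + 1 \<le> \<bar>b x\<bar>}) \<le> 2 * 2^m * e * (1/2)^i"
        by (simp add: m_def mult.assoc)
    qed
    also have "\<dots> = 2 * 2^m * e * (\<Sum>i<R. (1/2)^i)" by (simp add: sum_distrib_left)
    also have "(\<Sum>i<R. (1/2::real)^i) \<le> 2" by (simp add: sum_gp_strict)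
    hence "2 * 2^m * e * (\<Sum>i<R. (1/2::real)^i) \<le> 2 * 2^m * e * 2" using e0 by (intro mult_left_mono) auto
    finally show ?thesis by simp
  qed
  hence "ln 2 * (\<Sum>x\<in>X. real_of_int \<bar>b x\<bar>) \<le> ln 2 * (4 * 2^m * e)" by (intro mult_left_mono ln2')
  finally have "(\<Sum>x\<in>X. wt y (b x)) \<le> 2^m * e * (4 + 2*y + 4 * ln 2)"
    by (simp add: \<rho>_def algebra_simps)
  also have "\<dots> \<le> 2^m * e * (2*y + 8)" using ln2 e0 by (intro mult_left_mono) auto
  finally show ?thesis by (simp add: hcost_def X_def b_def m_def e_def mult.assoc)
qed

lemma wt_nonneg: "y \<ge> 2 \<Longrightarrow> wt y v \<ge> 0"
proof -
  assume y: "y \<ge> 2"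
  have e: "exp (-y) \<le> 1/4" by (rule exp_neg_le_quarter[OF y])
  show ?thesis
  proof (cases "v = 0")
    case True
    have "0 < 1 - 2 * exp (-y)" using e by simp
    moreover have "1 - 2 * exp (-y) \<le> 1" by simp
    ultimately have "ln (1 - 2 * exp (-y)) \<le> 0" by simp
    thus ?thesis using True by (simp add: wt_def)
  next
    case False thus ?thesis using y by (simp add: wt_def)
  qed
qed

lemma floor_eq_close:
  fixes s t :: real
  assumes "\<lfloor>s\<rfloor> = \<lfloor>t\<rfloor>" shows "\<bar>s - t\<bar> < 1"
  using assms by linarith

lemma partial_colouring:
  fixes U :: "nat set" and C :: "'c set" and a :: "'c \<Rightarrow> nat \<Rightarrow> real" and \<Delta> :: "'c \<Rightarrow> real"
  assumes U: "finite U" "card U > 0" and C: "finite C"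
    and a: "\<forall>c\<in>C. \<forall>j\<in>U. \<bar>a c j\<bar> \<le> 1" and D: "\<forall>c\<in>C. \<Delta> c > 0"
    and y2: "\<forall>c\<in>C. \<Delta> c ^ 2 / (2 * real (card U)) \<ge> 2"
    and cond: "(3/2) ^ card U * 2 powr (real (card U) / 3)
       < 2 ^ (card U - 1) * exp (-2 * (\<Sum>c\<in>C. hcost (\<Delta> c ^ 2 / (2 * real (card U)))))"
  shows "\<exists>z\<in>PiE U (\<lambda>_. {-1,0,1}). real (card {j\<in>U. z j \<noteq> 0}) \<ge> real (card U) / 3 \<and>
           (\<forall>c\<in>C. \<bar>\<Sum>j\<in>U. a c j * z j\<bar> \<le> \<Delta> c)"
proof -
  define m where "m = card U"
  define X where "X = cols U"
  define yc where "yc c = \<Delta> c ^ 2 / (2 * real m)" for c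
  define E0 where "E0 = (\<Sum>c\<in>C. hcost (yc c))"
  define bk where "bk c x = bucket U (a c) (\<Delta> c) x" for c x
  define cost where "cost x = (\<Sum>c\<in>C. wt (yc c) (bk c x))" for x
  define Rc where "Rc c = nat \<lceil>real m / (2 * \<Delta> c)\<rceil> + 1" for c
  have finX: "finite X" using U by (simp add: X_def finite_cols)
  have cardX: "card X = 2 ^ m" using U by (simp add: X_def m_def card_cols)
  have m0: "m > 0" using U by (simp add: m_def)
  have yc2: "\<forall>c\<in>C. yc c \<ge> 2" using y2 by (simp add: yc_def m_def)
  have cost0: "cost x \<ge> 0" for x unfolding cost_def using yc2 by (intro sum_nonneg wt_nonneg) auto
  have E00: "E0 \<ge> 0" unfolding E0_def hcost_def using yc2 by (intro sum_nonneg) auto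
  have sumcost: "(\<Sum>x\<in>X. cost x) \<le> 2^m * E0"
  proof -
    have "(\<Sum>x\<in>X. cost x) = (\<Sum>c\<in>C. \<Sum>x\<in>X. wt (yc c) (bk c x))"
      unfolding cost_def by (rule sum.swap)
    also have "\<dots> \<le> (\<Sum>c\<in>C. 2^m * hcost (yc c))"
    proof (intro sum_mono)
      fix c assume c: "c \<in> C"
      show "(\<Sum>x\<in>X. wt (yc c) (bk c x)) \<le> 2^m * hcost (yc c)"
        unfolding X_def bk_def m_def
        by (rule cost_bound[OF U]) (use a D c yc2 in \<open>auto simp: yc_def m_def\<close>)
    qed
    finally show ?thesis by (simp add: E0_def sum_distrib_left)
  qed
  define G where "G = {x\<in>X. cost x \<le> 2 * E0}"
  have finG: "finite G" using finX by (simp add: G_def)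
  have GX: "G \<subseteq> X" by (auto simp: G_def)
  have cardG: "real (card G) \<ge> 2 ^ (m - 1)"
  proof -
    have XG: "real (card (X - G)) \<le> 2 ^ (m - 1)"
    proof (cases "E0 > 0")
      case True
      have "real (card (X - G)) * (2 * E0) = (\<Sum>x\<in>X - G. 2 * E0)" by simp
      also have "\<dots> \<le> (\<Sum>x\<in>X - G. cost x)" by (intro sum_mono) (auto simp: G_def)
      also have "\<dots> \<le> (\<Sum>x\<in>X. cost x)" using finX cost0 by (intro sum_mono2) auto
      also have "\<dots> \<le> 2^m * E0" by (rule sumcost)
      also have "\<dots> = 2^(m-1) * (2 * E0)" using m0 by (cases m) auto
      finally show ?thesis using True by simp
    next
      case False
      hence "E0 = 0" using E00 by simp
      have "X - G = {}"
      proof (rule ccontr)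
        assume "X - G \<noteq> {}"
        then obtain x where x: "x \<in> X" "x \<notin> G" by blast
        hence "cost x > 0" using \<open>E0 = 0\<close> by (simp add: G_def)
        moreover have "cost x \<le> (\<Sum>x\<in>X. cost x)" using finX x cost0 by (intro member_le_sum) auto
        ultimately show False using sumcost \<open>E0 = 0\<close> by simp
      qed
      hence "card (X - G) = 0" by (simp only: card.empty)
      thus ?thesis by simp
    qed
    have "card X = card G + card (X - G)" using finX GX by (metis card_Diff_subset card_mono finite_subset le_add_diff_inverse)
    hence "real (card X) = real (card G) + real (card (X - G))" by (metis of_nat_add)
    hence "real (card G) = 2^m - real (card (X - G))" using cardX by simp
    moreover have "(2::real)^m = 2 * 2^(m-1)" using m0 by (cases m) auto
    ultimately show ?thesis using XG by simp
  qed
  define f where "f x = restrict (\<lambda>c. bk c x) C" for x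
  define B where "B = f ` G"
  have finB: "finite B" using finG by (simp add: B_def)
  have BPi: "B \<subseteq> PiE C (\<lambda>c. {-int (Rc c)..int (Rc c)})"
  proof
    fix \<beta> assume "\<beta> \<in> B"
    then obtain x where x: "x \<in> G" "\<beta> = f x" by (auto simp: B_def)
    have "\<bar>bk c x\<bar> \<le> int (Rc c)" if "c \<in> C" for c
      unfolding bk_def Rc_def m_def
      by (rule bucket_range[OF U(1)]) (use a D that x GX X_def in auto)
    thus "\<beta> \<in> PiE C (\<lambda>c. {-int (Rc c)..int (Rc c)})" using x by (force simp: f_def abs_le_iff)
  qed
  have cardB: "real (card B) \<le> exp (2 * E0)"
  proof -
    have "real (card B) * exp (- (2 * E0)) = (\<Sum>\<beta>\<in>B. exp (- (2 * E0)))" by simp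
    also have "\<dots> \<le> (\<Sum>\<beta>\<in>B. \<Prod>c\<in>C. exp (- wt (yc c) (\<beta> c)))"
    proof (intro sum_mono)
      fix \<beta> assume "\<beta> \<in> B"
      then obtain x where x: "x \<in> G" "\<beta> = f x" by (auto simp: B_def)
      have "(\<Prod>c\<in>C. exp (- wt (yc c) (\<beta> c))) = exp (\<Sum>c\<in>C. - wt (yc c) (\<beta> c))"
        using C by (simp add: exp_sum)
      also have "(\<Sum>c\<in>C. - wt (yc c) (\<beta> c)) = - cost x"
        unfolding cost_def using x by (simp add: f_def sum_negf)
      finally have "(\<Prod>c\<in>C. exp (- wt (yc c) (\<beta> c))) = exp (- cost x)" .
      moreover have "cost x \<le> 2 * E0" using x by (simp add: G_def)
      ultimately show "exp (- (2 * E0)) \<le> (\<Prod>c\<in>C. exp (- wt (yc c) (\<beta> c)))" by simp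
    qed
    also have "\<dots> \<le> (\<Sum>\<beta>\<in>PiE C (\<lambda>c. {-int (Rc c)..int (Rc c)}). \<Prod>c\<in>C. exp (- wt (yc c) (\<beta> c)))"
      by (intro sum_mono2 BPi finite_PiE C) (auto intro: prod_nonneg)
    also have "\<dots> = (\<Prod>c\<in>C. \<Sum>v\<in>{-int (Rc c)..int (Rc c)}. exp (- wt (yc c) v))"
      by (rule prod_sum_PiE[symmetric]) (use C in auto)
    also have "\<dots> \<le> 1"
      by (intro prod_le_1) (use yc2 kraft_le in \<open>auto intro: sum_nonneg\<close>)
    finally have "real (card B) * exp (- (2 * E0)) \<le> 1" .
    thus ?thesis by (simp add: exp_minus field_simps)
  qed
  have Gne: "G \<noteq> {}" using cardG by (auto simp: )
  have Bne: "B \<noteq> {}" using Gne by (simp add: B_def)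
  obtain \<beta> where \<beta>: "\<beta> \<in> B" "card G \<le> card (f -` {\<beta>} \<inter> G) * card B"
    using pigeonhole_card[of f G B] finG finB Bne by (auto simp: B_def)
  define F where "F = f -` {\<beta>} \<inter> G"
  have finF: "finite F" using finG by (simp add: F_def)
  have cardB0: "real (card B) > 0" using finB Bne by (simp add: card_gt_0_iff)
  have "2 ^ (m - 1) \<le> real (card F) * real (card B)"
    using cardG \<beta>(2) by (simp add: F_def flip: of_nat_mult)
  also have "\<dots> \<le> real (card F) * exp (2 * E0)" using cardB by (intro mult_left_mono) auto
  finally have "2 ^ (m - 1) * exp (- (2 * E0)) \<le> real (card F)"
    by (simp add: exp_minus field_simps)
  hence Fbig: "(3/2) ^ m * 2 powr (real m / 3) < real (card F)"
    using cond by (simp add: m_def yc_def E0_def)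
  moreover have "(3/2) ^ m * 2 powr (real m / 3) \<ge> (0::real)" by simp
  ultimately have "real (card F) > 0" by linarith
  hence "F \<noteq> {}" by (metis card.empty less_irrefl of_nat_0)
  then obtain x0 where x0: "x0 \<in> F" by blast
  have x0X: "x0 \<in> X" using x0 GX by (auto simp: F_def)
  define Near where "Near = {y\<in>cols U. real (card {j\<in>U. y j \<noteq> x0 j}) < real (card U) / 3}"
  have "real (card Near) \<le> (3/2) ^ m * 2 powr (real m / 3)"
    unfolding Near_def m_def by (rule ball_bound[OF U(1)]) (use x0X X_def in simp)
  hence nearb: "real (card Near) \<le> (3/2) ^ m * 2 powr (real m / 3)" .
  have "\<not> F \<subseteq> Near"
  proof
    assume FN: "F \<subseteq> Near"
    have "finite Near" using U(1) by (simp add: Near_def finite_cols)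
    hence "card F \<le> card Near" using FN by (rule card_mono)
    hence "real (card F) \<le> real (card Near)" by simp
    thus False using nearb Fbig by linarith
  qed
  then obtain y where y: "y \<in> F" "y \<notin> Near" by blast
  have yX: "y \<in> X" using y GX by (auto simp: F_def)
  have far: "real (card {j\<in>U. y j \<noteq> x0 j}) \<ge> real m / 3" using y yX by (auto simp: Near_def X_def m_def)
  define z where "z j = (if j \<in> U then (x0 j - y j) / 2 else undefined)" for j
  have vals: "x0 j \<in> {-1,1}" "y j \<in> {-1,1}" if "j \<in> U" for j
    using x0X yX that by (auto simp: X_def cols_def PiE_iff)
  have zPi: "z \<in> PiE U (\<lambda>_. {-1,0,1})"
  proof -
    have "z j \<in> {-1,0,1}" if "j \<in> U" for j using vals[OF that] that by (auto simp: z_def)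
    moreover have "z j = undefined" if "j \<notin> U" for j using that by (simp add: z_def)
    ultimately show ?thesis by (auto simp: PiE_iff extensional_def)
  qed
  have nz: "{j\<in>U. z j \<noteq> 0} = {j\<in>U. y j \<noteq> x0 j}" by (auto simp: z_def)
  have same: "bk c x0 = bk c y" if "c \<in> C" for c
  proof -
    have "f x0 = \<beta>" "f y = \<beta>" using x0 y by (auto simp: F_def)
    hence "f x0 c = f y c" by simp
    thus ?thesis using that by (simp add: f_def)
  qed
  have disc: "\<bar>\<Sum>j\<in>U. a c j * z j\<bar> \<le> \<Delta> c" if c: "c \<in> C" for c
  proof -
    define s where "s x = (\<Sum>j\<in>U. a c j * x j)" for x
    have "\<bar>(s x0 / (2 * \<Delta> c) + 1/2) - (s y / (2 * \<Delta> c) + 1/2)\<bar> < 1"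
      by (rule floor_eq_close) (use same[OF c] in \<open>simp add: bk_def bucket_def s_def\<close>)
    hence "\<bar>(s x0 - s y) / (2 * \<Delta> c)\<bar> < 1" by (simp add: diff_divide_distrib)
    have dpos: "2 * \<Delta> c > 0" using D c by simp
    hence "\<bar>s x0 - s y\<bar> / (2 * \<Delta> c) < 1" using \<open>\<bar>(s x0 - s y) / (2 * \<Delta> c)\<bar> < 1\<close> by (simp add: abs_divide)
    hence "\<bar>s x0 - s y\<bar> < 1 * (2 * \<Delta> c)" using dpos by (simp only: pos_divide_less_eq)
    hence "\<bar>s x0 - s y\<bar> < 2 * \<Delta> c" by simp
    moreover have "(\<Sum>j\<in>U. a c j * z j) = (s x0 - s y) / 2"
      by (simp add: s_def z_def sum_subtractf[symmetric] sum_divide_distrib algebra_simps)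
    ultimately show ?thesis by simp
  qed
  have "real (card {j\<in>U. z j \<noteq> 0}) \<ge> real (card U) / 3" using far nz by (simp add: m_def)
  thus ?thesis using zPi disc by blast
qed

lemma find_round:
  fixes N m :: real and r :: nat
  assumes "m \<ge> 1" "m \<le> N * (2/3)^r"
  shows "\<exists>r'\<ge>r. N * (2/3)^(Suc r') < m \<and> m \<le> N * (2/3)^r'"
proof -
  have N: "N > 0"
  proof (rule ccontr)
    assume "\<not> N > 0"
    hence "N * (2/3)^r \<le> 0" using mult_nonpos_nonneg[of N "(2/3::real)^r"] by simp
    thus False using assms by linarith
  qed
  obtain k where k: "(2/3::real)^k < 1 / N" using real_arch_pow_inv[of "1/N" "2/3::real"] N by auto
  define P where "P i = (r \<le> i \<and> N * (2/3::real)^i < m)" for i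
  have "P (max k r)"
  proof -
    have "(2/3::real)^(max k r) \<le> (2/3)^k" by (intro power_decreasing) auto
    hence "(2/3::real)^(max k r) < 1/N" using k by linarith
    hence "N * (2/3::real)^(max k r) < N * (1/N)" using N by (intro mult_strict_left_mono) auto
    hence "N * (2/3::real)^(max k r) < m" using N assms by simp
    moreover have "r \<le> max k r" by simp
    ultimately show ?thesis unfolding P_def by blast
  qed
  define r0 where "r0 = (LEAST i. P i)"
  have Pr0: "P r0" unfolding r0_def by (rule LeastI) fact
  have "r0 \<noteq> r" using Pr0 assms by (auto simp: P_def)
  with Pr0 obtain r' where r': "r0 = Suc r'" "r' \<ge> r" by (cases r0) (auto simp: P_def)
  have "\<not> P r'"
  proof
    assume "P r'"
    hence "r0 \<le> r'" unfolding r0_def by (rule Least_le)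
    thus False using r' by simp
  qed
  hence "m \<le> N * (2/3)^r'" using r' by (auto simp: P_def)
  thus ?thesis using Pr0 r' by (auto simp: P_def)
qed

lemma herdisc_iter:
  fixes C :: "'c set" and a :: "'c \<Rightarrow> nat \<Rightarrow> real" and \<tau> :: "'c \<Rightarrow> real"
  assumes C: "finite C" and a: "\<forall>c\<in>C. \<forall>j. \<bar>a c j\<bar> \<le> 1" and \<tau>: "\<forall>c\<in>C. \<tau> c > 0"
    and \<sigma>: "0 < \<sigma>" "\<sigma> < 1" and \<alpha>: "\<alpha> > 0" and Mb: "Mb \<ge> 1"
    and rc: "\<And>r m. Mb \<le> real m \<Longrightarrow> N * (2/3)^(Suc r) < real m \<Longrightarrow> real m \<le> N * (2/3)^r \<Longrightarrow>
          (\<forall>c\<in>C. (\<tau> c * \<alpha> * \<sigma>^r)^2 / (2 * real m) \<ge> 2) \<and>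
          (3/2) ^ m * 2 powr (real m / 3)
            < 2 ^ (m - 1) * exp (-2 * (\<Sum>c\<in>C. hcost ((\<tau> c * \<alpha> * \<sigma>^r)^2 / (2 * real m))))"
  shows "finite W \<Longrightarrow> real (card W) \<le> N * (2/3)^r \<Longrightarrow>
     \<exists>ch\<in>cols W. \<forall>c\<in>C. \<bar>\<Sum>j\<in>W. a c j * ch j\<bar> \<le> \<tau> c * \<alpha> * \<sigma>^r / (1 - \<sigma>) + Mb"
proof (induction "card W" arbitrary: W r rule: less_induct)
  case less
  show ?case
  proof (cases "real (card W) < Mb")
    case True
    define ch where "ch = restrict (\<lambda>_. 1::real) W"
    have "ch \<in> cols W" by (simp add: ch_def cols_def)
    moreover have "\<bar>\<Sum>j\<in>W. a c j * ch j\<bar> \<le> \<tau> c * \<alpha> * \<sigma>^r / (1 - \<sigma>) + Mb" if c: "c \<in> C" for c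
    proof -
      have "\<bar>\<Sum>j\<in>W. a c j * ch j\<bar> \<le> real (card W)"
        by (rule dot_abs_le) (use less.prems a c \<open>ch \<in> cols W\<close> in auto)
      moreover have "0 \<le> \<tau> c * \<alpha> * \<sigma>^r / (1 - \<sigma>)"
        using \<tau> c \<alpha> \<sigma> by (intro divide_nonneg_nonneg mult_nonneg_nonneg) auto
      ultimately show ?thesis using True by linarith
    qed
    ultimately show ?thesis by blast
  next
    case False
    define m where "m = card W"
    have m1: "real m \<ge> 1" using False Mb by (simp add: m_def)
    obtain r' where r': "r' \<ge> r" "N * (2/3)^(Suc r') < real m" "real m \<le> N * (2/3)^r'"
      using find_round[OF m1] less.prems by (auto simp: m_def)
    have rcr: "(\<forall>c\<in>C. (\<tau> c * \<alpha> * \<sigma>^r')^2 / (2 * real m) \<ge> 2) \<and>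
          (3/2) ^ m * 2 powr (real m / 3)
            < 2 ^ (m - 1) * exp (-2 * (\<Sum>c\<in>C. hcost ((\<tau> c * \<alpha> * \<sigma>^r')^2 / (2 * real m))))"
    proof -
      have "Mb \<le> real m" using False by (simp add: m_def)
      from rc[OF this r'(2) r'(3)] show ?thesis .
    qed
    have "\<exists>z\<in>PiE W (\<lambda>_. {-1,0,1}). real (card {j\<in>W. z j \<noteq> 0}) \<ge> real (card W) / 3 \<and>
           (\<forall>c\<in>C. \<bar>\<Sum>j\<in>W. a c j * z j\<bar> \<le> \<tau> c * \<alpha> * \<sigma>^r')"
      by (rule partial_colouring[OF less.prems(1) _ C _ _ conjunct1[OF rcr[unfolded m_def]] conjunct2[OF rcr[unfolded m_def]]])
         (use m1 a \<tau> \<alpha> \<sigma> in \<open>simp_all add: m_def\<close>)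
    then obtain z where z: "z \<in> PiE W (\<lambda>_. {-1,0,1})" "real (card {j\<in>W. z j \<noteq> 0}) \<ge> real m / 3"
        "\<forall>c\<in>C. \<bar>\<Sum>j\<in>W. a c j * z j\<bar> \<le> \<tau> c * \<alpha> * \<sigma>^r'" by (auto simp: m_def)
    define W' where "W' = {j\<in>W. z j = 0}"
    have finW': "finite W'" using less.prems by (simp add: W'_def)
    have split: "W = W' \<union> {j\<in>W. z j \<noteq> 0}" "W' \<inter> {j\<in>W. z j \<noteq> 0} = {}" by (auto simp: W'_def)
    have cardsplit: "real m = real (card W') + real (card {j\<in>W. z j \<noteq> 0})"
    proof -
      have "card W = card W' + card {j\<in>W. z j \<noteq> 0}"
        using less.prems(1) finW' split(2) by (subst split(1), intro card_Un_disjoint) auto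
      thus ?thesis by (simp add: m_def)
    qed
    have cW': "real (card W') \<le> N * (2/3)^(Suc r')" using cardsplit z(2) r'(3) by simp
    have lt: "card W' < card W" using cardsplit z(2) m1 by (simp add: m_def)
    obtain ch' where ch': "ch' \<in> cols W'"
        "\<forall>c\<in>C. \<bar>\<Sum>j\<in>W'. a c j * ch' j\<bar> \<le> \<tau> c * \<alpha> * \<sigma>^(Suc r') / (1 - \<sigma>) + Mb"
      using less.hyps[OF lt finW' cW'] by blast
    define ch where "ch j = (if j \<in> W' then ch' j else if j \<in> W then z j else undefined)" for j
    have chc: "ch \<in> cols W"
    proof -
      have "ch j \<in> {-1,1}" if "j \<in> W" for j
      proof (cases "j \<in> W'")
        case True thus ?thesis using ch'(1) by (auto simp: ch_def cols_def PiE_iff)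
      next
        case False
        hence "z j \<noteq> 0" using that by (simp add: W'_def)
        moreover have "z j \<in> {-1,0,1}" using z(1) that by (auto simp: PiE_iff)
        ultimately show ?thesis using False that by (auto simp: ch_def)
      qed
      moreover have "ch j = undefined" if "j \<notin> W" for j
        using that by (auto simp: ch_def W'_def)
      ultimately show ?thesis by (auto simp: cols_def PiE_iff extensional_def)
    qed
    have bound: "\<bar>\<Sum>j\<in>W. a c j * ch j\<bar> \<le> \<tau> c * \<alpha> * \<sigma>^r / (1 - \<sigma>) + Mb" if c: "c \<in> C" for c
    proof -
      have "(\<Sum>j\<in>W. a c j * ch j) = (\<Sum>j\<in>W'. a c j * ch j) + (\<Sum>j\<in>{j\<in>W. z j \<noteq> 0}. a c j * ch j)"
        using less.prems(1) finW' split(2) by (subst split(1), intro sum.union_disjoint) auto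
      also have "(\<Sum>j\<in>W'. a c j * ch j) = (\<Sum>j\<in>W'. a c j * ch' j)" by (simp add: ch_def)
      also have "(\<Sum>j\<in>{j\<in>W. z j \<noteq> 0}. a c j * ch j) = (\<Sum>j\<in>{j\<in>W. z j \<noteq> 0}. a c j * z j)"
        by (intro sum.cong) (auto simp: ch_def W'_def)
      also have "\<dots> = (\<Sum>j\<in>W. a c j * z j)"
        using less.prems(1) by (intro sum.mono_neutral_left) auto
      finally have "\<bar>\<Sum>j\<in>W. a c j * ch j\<bar> \<le> \<bar>\<Sum>j\<in>W'. a c j * ch' j\<bar> + \<bar>\<Sum>j\<in>W. a c j * z j\<bar>"
        by linarith
      also have "\<dots> \<le> (\<tau> c * \<alpha> * \<sigma>^(Suc r') / (1 - \<sigma>) + Mb) + \<tau> c * \<alpha> * \<sigma>^r'"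
        using ch'(2) z(3) c by (intro add_mono) auto
      also have "\<dots> = \<tau> c * \<alpha> * \<sigma>^r' / (1 - \<sigma>) + Mb" using \<sigma> by (simp add: field_simps)
      also have "\<tau> c * \<alpha> * \<sigma>^r' / (1 - \<sigma>) \<le> \<tau> c * \<alpha> * \<sigma>^r / (1 - \<sigma>)"
      proof -
        have "\<sigma>^r' \<le> \<sigma>^r" using \<sigma> r'(1) by (intro power_decreasing) auto
        hence "(\<tau> c * \<alpha>) * \<sigma>^r' \<le> (\<tau> c * \<alpha>) * \<sigma>^r" using \<tau> c \<alpha> by (intro mult_left_mono) auto
        thus ?thesis using \<sigma> by (intro divide_right_mono) auto
      qed
      finally show ?thesis by simp
    qed
    show ?thesis using chc bound by blast
  qed
qed

lemma lsv:
  fixes J :: "nat set" and C :: "'c set" and a :: "'c \<Rightarrow> nat \<Rightarrow> real" and D :: "'c \<Rightarrow> real"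
  assumes J: "finite J"
    and herd: "\<And>U. U \<subseteq> J \<Longrightarrow> \<exists>ch\<in>cols U. \<forall>c\<in>C. \<bar>\<Sum>j\<in>U. a c j * ch j\<bar> \<le> D c"
  shows "\<forall>k::nat\<Rightarrow>nat. (\<forall>j\<in>J. k j \<le> 2^p) \<longrightarrow> (\<exists>\<epsilon>. (\<forall>j\<in>J. \<epsilon> j \<in> {-1,1}) \<and>
     (\<forall>c\<in>C. \<bar>\<Sum>j\<in>J. (\<epsilon> j - (-1 + 2 * real (k j) / 2^p)) * a c j\<bar> \<le> 2 * D c * (1 - 1/2^p)))"
proof (induction p)
  case 0
  show ?case
  proof (intro allI impI)
    fix k :: "nat \<Rightarrow> nat" assume k: "\<forall>j\<in>J. k j \<le> 2^0"
    define \<epsilon> where "\<epsilon> j = -1 + 2 * real (k j)" for j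
    have "\<epsilon> j \<in> {-1,1}" if "j \<in> J" for j
    proof -
      have "k j \<le> 1" using k that by simp
      hence "k j = 0 \<or> k j = 1" by auto
      thus ?thesis by (auto simp: \<epsilon>_def)
    qed
    moreover have "\<forall>c\<in>C. \<bar>\<Sum>j\<in>J. (\<epsilon> j - (-1 + 2 * real (k j) / 2^0)) * a c j\<bar> \<le> 2 * D c * (1 - 1/2^0)"
      by (simp add: \<epsilon>_def)
    ultimately show "\<exists>\<epsilon>. (\<forall>j\<in>J. \<epsilon> j \<in> {-1,1}) \<and>
     (\<forall>c\<in>C. \<bar>\<Sum>j\<in>J. (\<epsilon> j - (-1 + 2 * real (k j) / 2^0)) * a c j\<bar> \<le> 2 * D c * (1 - 1/2^0))" by blast
  qed
next
  case (Suc p)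
  show ?case
  proof (intro allI impI)
    fix k :: "nat \<Rightarrow> nat" assume k: "\<forall>j\<in>J. k j \<le> 2^Suc p"
    define S where "S = {j\<in>J. odd (k j)}"
    obtain ch where ch: "ch \<in> cols S" "\<forall>c\<in>C. \<bar>\<Sum>j\<in>S. a c j * ch j\<bar> \<le> D c"
      using herd[of S] by (auto simp: S_def)
    have chv: "ch j \<in> {-1,1}" if "j \<in> S" for j using ch(1) that by (auto simp: cols_def PiE_iff)
    define k' where "k' j = (if j \<in> S \<and> ch j = 1 then k j div 2 + 1 else k j div 2)" for j
    have k'le: "\<forall>j\<in>J. k' j \<le> 2^p"
    proof
      fix j assume j: "j \<in> J"
      show "k' j \<le> 2^p"
      proof (cases "j \<in> S \<and> ch j = 1")
        case True
        hence "odd (k j)" by (simp add: S_def)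
        hence "k j \<noteq> 2^Suc p" by auto
        hence "k j < 2 * 2^p" using k j by (simp add: le_neq_implies_less)
        hence "k j div 2 < 2^p" using \<open>odd (k j)\<close> by (auto elim!: oddE)
        thus ?thesis using True by (simp add: k'_def)
      next
        case False
        have "k j div 2 \<le> 2^Suc p div 2" using k j by (intro div_le_mono) auto
        hence "k j div 2 \<le> 2^p" by simp
        moreover have "k' j = k j div 2" using False by (simp add: k'_def)
        ultimately show ?thesis by simp
      qed
    qed
    have ident: "-1 + 2 * real (k' j) / 2^p = (-1 + 2 * real (k j) / 2^Suc p) + (if j \<in> S then ch j / 2^p else 0)"
      if j: "j \<in> J" for j
    proof (cases "j \<in> S")
      case True
      hence odd: "odd (k j)" by (simp add: S_def)
      then obtain q where q: "k j = 2 * q + 1" by (auto elim: oddE)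
      have kd: "k j div 2 = q" using q by simp
      show ?thesis
      proof (cases "ch j = 1")
        case True
        thus ?thesis using \<open>j \<in> S\<close> q kd by (simp add: k'_def field_simps)
      next
        case False
        hence "ch j = -1" using chv[OF \<open>j \<in> S\<close>] by auto
        thus ?thesis using \<open>j \<in> S\<close> q kd by (simp add: k'_def field_simps)
      qed
    next
      case False
      hence "even (k j)" using j by (simp add: S_def)
      then obtain q where q: "k j = 2 * q" by (auto elim: evenE)
      thus ?thesis using False by (simp add: k'_def field_simps)
    qed
    obtain \<epsilon> where \<epsilon>: "\<forall>j\<in>J. \<epsilon> j \<in> {-1,1}"
      "\<forall>c\<in>C. \<bar>\<Sum>j\<in>J. (\<epsilon> j - (-1 + 2 * real (k' j) / 2^p)) * a c j\<bar> \<le> 2 * D c * (1 - 1/2^p)"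
      using Suc.IH k'le by blast
    have "\<bar>\<Sum>j\<in>J. (\<epsilon> j - (-1 + 2 * real (k j) / 2^Suc p)) * a c j\<bar> \<le> 2 * D c * (1 - 1/2^Suc p)"
      if c: "c \<in> C" for c
    proof -
      have "(\<Sum>j\<in>J. (\<epsilon> j - (-1 + 2 * real (k j) / 2^Suc p)) * a c j)
          = (\<Sum>j\<in>J. (\<epsilon> j - (-1 + 2 * real (k' j) / 2^p)) * a c j + (if j \<in> S then ch j / 2^p else 0) * a c j)"
      proof (intro sum.cong refl)
        fix j assume j: "j \<in> J"
        show "(\<epsilon> j - (-1 + 2 * real (k j) / 2^Suc p)) * a c j
          = (\<epsilon> j - (-1 + 2 * real (k' j) / 2^p)) * a c j + (if j \<in> S then ch j / 2^p else 0) * a c j"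
          by (subst ident[OF j]) (simp only: algebra_simps)
      qed
      also have "\<dots> = (\<Sum>j\<in>J. (\<epsilon> j - (-1 + 2 * real (k' j) / 2^p)) * a c j) + (\<Sum>j\<in>J. (if j \<in> S then ch j / 2^p else 0) * a c j)"
        by (rule sum.distrib)
      also have "(\<Sum>j\<in>J. (if j \<in> S then ch j / 2^p else 0) * a c j) = (\<Sum>j\<in>S. a c j * ch j) / 2^p"
      proof -
        have "(\<Sum>j\<in>J. (if j \<in> S then ch j / 2^p else 0) * a c j) = (\<Sum>j\<in>J. if j \<in> S then a c j * ch j / 2^p else 0)"
          by (intro sum.cong) auto
        also have "\<dots> = (\<Sum>j\<in>S. a c j * ch j / 2^p)"
          using J by (simp add: sum.inter_filter[symmetric] S_def)
        also have "\<dots> = (\<Sum>j\<in>S. a c j * ch j) / 2^p" by (simp add: sum_divide_distrib)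
        finally show ?thesis .
      qed
      finally have eq: "(\<Sum>j\<in>J. (\<epsilon> j - (-1 + 2 * real (k j) / 2^Suc p)) * a c j) =
          (\<Sum>j\<in>J. (\<epsilon> j - (-1 + 2 * real (k' j) / 2^p)) * a c j) + (\<Sum>j\<in>S. a c j * ch j) / 2^p" .
      have b2: "\<bar>(\<Sum>j\<in>S. a c j * ch j) / 2^p\<bar> \<le> D c / 2^p"
        using ch(2) c by (simp add: abs_divide divide_right_mono)
      have "\<bar>\<Sum>j\<in>J. (\<epsilon> j - (-1 + 2 * real (k j) / 2^Suc p)) * a c j\<bar> \<le> 2 * D c * (1 - 1/2^p) + D c / 2^p"
      proof -
        have b1: "\<bar>\<Sum>j\<in>J. (\<epsilon> j - (-1 + 2 * real (k' j) / 2^p)) * a c j\<bar> \<le> 2 * D c * (1 - 1/2^p)"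
          using \<epsilon>(2) c by blast
        show ?thesis unfolding eq
          using abs_triangle_ineq[of "\<Sum>j\<in>J. (\<epsilon> j - (-1 + 2 * real (k' j) / 2^p)) * a c j" "(\<Sum>j\<in>S. a c j * ch j) / 2^p"] b1 b2
          by linarith
      qed
      also have "\<dots> = 2 * D c * (1 - 1/2^Suc p)" by (simp add: field_simps)
      finally show ?thesis .
    qed
    thus "\<exists>\<epsilon>. (\<forall>j\<in>J. \<epsilon> j \<in> {-1,1}) \<and>
     (\<forall>c\<in>C. \<bar>\<Sum>j\<in>J. (\<epsilon> j - (-1 + 2 * real (k j) / 2^Suc p)) * a c j\<bar> \<le> 2 * D c * (1 - 1/2^Suc p))"
      using \<epsilon>(1) by blast
  qed
qed

lemma exp_lower_pow: "x \<ge> 0 \<Longrightarrow> k > 0 \<Longrightarrow> (1 + x / real k) ^ k \<le> exp (x::real)"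
  by (rule exp_ge_one_plus_x_over_n_power_n) auto

lemma exp_upper_pow:
  assumes "0 \<le> x" "x < real k" "k > 0"
  shows "exp (x::real) \<le> (1 / (1 - x / real k)) ^ k"
proof -
  have "1 + (- x / real k) \<le> exp (- x / real k)" by (rule exp_ge_add_one_self)
  hence "1 - x / real k \<le> exp (- x / real k)" by simp
  moreover have "0 < 1 - x / real k" using assms by simp
  ultimately have "exp (x / real k) \<le> 1 / (1 - x / real k)"
    by (simp add: exp_minus field_simps)
  hence "exp (x / real k) ^ k \<le> (1 / (1 - x / real k)) ^ k" by (intro power_mono) auto
  moreover have "exp (x / real k) ^ k = exp x" using assms by (simp flip: exp_of_nat_mult)
  ultimately show ?thesis by simp
qed

lemma num1: "exp (375/512::real) \<ge> 2"
proof -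
  have "(1 + (375/512) / real (8::nat))^8 \<le> exp (375/512::real)" by (rule exp_lower_pow) auto
  moreover have "(2::real) \<le> (1 + (375/512) / real (8::nat))^8" by (simp add: power_divide)
  ultimately show ?thesis by linarith
qed

lemma num2: "exp (375/768::real) \<ge> 3/2"
proof -
  have "(1 + (375/768) / real (2::nat))^2 \<le> exp (375/768::real)" by (rule exp_lower_pow) auto
  moreover have "(3/2::real) \<le> (1 + (375/768) / real (2::nat))^2" by (simp add: power_divide)
  ultimately show ?thesis by linarith
qed

lemma num3: "exp (25/2::real) \<ge> 130000"
proof -
  have "(1 + (25/2) / real (100::nat))^100 \<le> exp (25/2::real)" by (rule exp_lower_pow) auto
  moreover have "(130000::real) \<le> (1 + (25/2) / real (100::nat))^100" by (simp add: power_divide)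
  ultimately show ?thesis by linarith
qed

lemma num4: "exp (41/100::real) \<ge> 3/2"
proof -
  have "(1 + (41/100) / real (64::nat))^64 \<le> exp (41/100::real)" by (rule exp_lower_pow) auto
  moreover have "(3/2::real) \<le> (1 + (41/100) / real (64::nat))^64" by (simp add: power_divide)
  ultimately show ?thesis by linarith
qed

lemma num5: "exp (68/100::real) \<le> 2"
proof -
  have "exp (68/100::real) \<le> (1 / (1 - (68/100) / real (64::nat)))^64" by (rule exp_upper_pow) auto
  moreover have "(1 / (1 - (68/100) / real (64::nat)))^64 \<le> (2::real)" by (simp add: power_divide)
  ultimately show ?thesis by linarith
qed

lemma ln2_bounds: "68/100 \<le> ln (2::real)" "ln (2::real) \<le> 1"
proof -
  show "68/100 \<le> ln (2::real)" using num5 by (metis exp_le_cancel_iff exp_ln zero_less_numeral)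
  show "ln (2::real) \<le> 1" using ln_2_less_1 by simp
qed

lemma ln15_bound: "ln (3/2::real) \<le> 41/100"
  using num4 by (metis exp_le_cancel_iff exp_ln divide_pos_pos zero_less_numeral)

lemma hcost_mono:
  assumes "0 \<le> Y" "Y \<le> y"
  shows "hcost y \<le> hcost Y"
proof -
  define d where "d = y - Y"
  have d: "d \<ge> 0" using assms by (simp add: d_def)
  have "2*y + 8 = (2*Y+8) + 2*d" by (simp add: d_def)
  also have "\<dots> \<le> (2*Y+8) * (1 + d)"
  proof -
    have "2 * d \<le> (2*Y+8) * d" using assms d by (intro mult_right_mono) auto
    thus ?thesis by (simp add: algebra_simps)
  qed
  also have "\<dots> \<le> (2*Y+8) * exp d"
  proof -
    have "1 + d \<le> exp d" by (rule exp_ge_add_one_self)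
    thus ?thesis using assms by (intro mult_left_mono) auto
  qed
  finally have a: "2*y + 8 \<le> (2*Y+8) * exp d" .
  have "hcost y = exp (-Y) * exp (-d) * (2*y+8)" by (simp add: hcost_def d_def flip: exp_add)
  also have "\<dots> \<le> exp (-Y) * exp (-d) * ((2*Y+8) * exp d)" using a by (intro mult_left_mono) auto
  also have "\<dots> = hcost Y" by (simp add: hcost_def exp_minus field_simps)
  finally show ?thesis .
qed

lemma hcost_Y:
  assumes "Y \<ge> 25/2"
  shows "hcost Y \<le> 33 * exp (-25/2) * exp (-(15/16) * (Y - 25/2))"
proof -
  define u where "u = Y - 25/2"
  have u: "u \<ge> 0" using assms by (simp add: u_def)
  have "2*Y + 8 = 33 * (1 + 2*u/33)" by (simp add: u_def field_simps)
  also have "\<dots> \<le> 33 * (1 + u/16)" using u by simp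
  also have "\<dots> \<le> 33 * exp (u/16)"
  proof -
    have e: "1 + u/16 \<le> exp (u/16)" by (rule exp_ge_add_one_self)
    show ?thesis using mult_left_mono[OF e, of 33] by simp
  qed
  finally have a: "2*Y + 8 \<le> 33 * exp (u/16)" .
  have "hcost Y = exp (-25/2) * exp (-u) * (2*Y + 8)" by (simp add: hcost_def u_def flip: exp_add)
  also have "\<dots> \<le> exp (-25/2) * exp (-u) * (33 * exp (u/16))" using a by (intro mult_left_mono) auto
  also have "\<dots> = 33 * exp (-25/2) * exp (-(15/16) * u)" by (simp add: field_simps flip: exp_add)
  finally show ?thesis by (simp add: u_def)
qed

lemma exp_neg_mult_le:
  assumes "exp a \<ge> b" "b > 0"
  shows "exp (- (a * real l)) \<le> (1/b) ^ l"
proof -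
  have "b ^ l \<le> exp a ^ l" using assms by (intro power_mono) auto
  also have "exp a ^ l = exp (a * real l)" by (simp add: exp_of_nat_mult[symmetric] mult.commute)
  finally have "b ^ l \<le> exp (a * real l)" .
  hence "1 / exp (a * real l) \<le> 1 / b ^ l" using assms by (intro divide_left_mono) auto
  thus ?thesis by (simp add: exp_minus power_divide field_simps)
qed

lemma hcost_rl:
  "hcost (25/2 + (25/32) * real l + (25/48) * real r) \<le> 33 * exp (-25/2) * (1/2)^l * (2/3)^r"
proof -
  have "hcost (25/2 + (25/32) * real l + (25/48) * real r)
      \<le> 33 * exp (-25/2) * exp (-(15/16) * ((25/32) * real l + (25/48) * real r))"
    using hcost_Y[of "25/2 + (25/32) * real l + (25/48) * real r"] by simp
  also have "exp (-(15/16) * ((25/32) * real l + (25/48) * real r)) =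
      exp (- ((375/512) * real l)) * exp (- ((375/768) * real r))"
    by (simp add: algebra_simps flip: exp_add)
  also have "\<dots> \<le> (1/2)^l * (1/(3/2))^r"
    by (intro mult_mono exp_neg_mult_le num1 num2) auto
  finally show ?thesis by (simp add: mult.assoc)
qed

definition tau :: "nat \<times> nat \<Rightarrow> real" where "tau c = 1 + real (snd c) / 32"

lemma y_lower:
  assumes n: "n \<ge> 1" and m: "real m > 0" "real m \<le> real n * (2/3)^r"
  shows "((1 + real l / 32) * (5 * sqrt (real n)) * (5/6)^r)^2 / (2 * real m)
           \<ge> 25/2 + (25/32) * real l + (25/48) * real r"
proof -
  have nm: "real n / real m \<ge> (3/2)^r"
  proof -
    have "(3/2::real)^r * real m \<le> (3/2)^r * (real n * (2/3)^r)" using m by (intro mult_left_mono) auto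
    also have "\<dots> = real n" by (simp add: power_mult_distrib[symmetric])
    finally show ?thesis using m by (simp add: field_simps)
  qed
  have "((1 + real l / 32) * (5 * sqrt (real n)) * (5/6)^r)^2 / (2 * real m)
     = (25/2) * (1 + real l / 32)^2 * (25/36)^r * (real n / real m)"
  proof -
    have s1: "(5 * sqrt (real n))^2 = 25 * real n" using real_sqrt_pow2[of "real n"] by (simp add: power_mult_distrib)
    have s2: "((5/6::real)^r)^2 = (25/36)^r"
    proof -
      have "((5/6::real)^r)^2 = ((5/6)^2)^r" by (simp only: power_mult[symmetric] mult.commute)
      thus ?thesis by (simp add: power_divide)
    qed
    have "((1 + real l / 32) * (5 * sqrt (real n)) * (5/6)^r)^2 = (1 + real l / 32)^2 * (5 * sqrt (real n))^2 * ((5/6)^r)^2"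
      by (simp only: power_mult_distrib)
    also have "\<dots> = (1 + real l / 32)^2 * (25 * real n) * (25/36)^r" by (simp only: s1 s2)
    finally show ?thesis using m by (simp add: field_simps)
  qed
  also have "\<dots> \<ge> (25/2) * (1 + real l / 32)^2 * (25/36)^r * (3/2)^r"
    using nm by (intro mult_left_mono) auto
  finally have a: "((1 + real l / 32) * (5 * sqrt (real n)) * (5/6)^r)^2 / (2 * real m)
     \<ge> (25/2) * ((1 + real l / 32)^2 * (25/24)^r)"
    by (simp add: power_mult_distrib[symmetric] mult.assoc)
  have b1: "(1 + real l / 32)^2 \<ge> 1 + real l / 16" by (simp add: power2_eq_square field_simps)
  have b2: "(25/24::real)^r \<ge> 1 + real r / 24"
    using Bernoulli_inequality[of "1/24::real" r] by simp
  have "(1 + real l / 32)^2 * (25/24)^r \<ge> (1 + real l / 16) * (1 + real r / 24)"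
    using b1 b2 by (intro mult_mono) auto
  moreover have "(1 + real l / 16) * (1 + real r / 24) \<ge> 1 + real l / 16 + real r / 24"
    by (simp add: field_simps)
  ultimately have "(1 + real l / 32)^2 * (25/24)^r \<ge> 1 + real l / 16 + real r / 24" by linarith
  hence "(25/2) * ((1 + real l / 32)^2 * (25/24)^r) \<ge> (25/2) * (1 + real l / 16 + real r / 24)"
    by (intro mult_left_mono) auto
  moreover have "(25/2) * (1 + real l / 16 + real r / 24) = 25/2 + (25/32) * real l + (25/48) * real r"
    by (simp add: field_simps)
  ultimately show ?thesis using a by linarith
qed

lemma sum_hcost_bound:
  fixes n L r m :: nat
  assumes n: "n \<ge> 1" and m: "real m > 0" "real m \<le> real n * (2/3)^r"
  shows "(\<Sum>c\<in>{1..16*n}\<times>{..<L}. hcost ((tau c * (5 * sqrt (real n)) * (5/6)^r)^2 / (2 * real m)))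
           \<le> 16 * real n * (66 * exp (-25/2) * (2/3)^r)"
proof -
  have "(\<Sum>c\<in>{1..16*n}\<times>{..<L}. hcost ((tau c * (5 * sqrt (real n)) * (5/6)^r)^2 / (2 * real m)))
      = (\<Sum>k\<in>{1..16*n}. \<Sum>l\<in>{..<L}. hcost (((1 + real l / 32) * (5 * sqrt (real n)) * (5/6)^r)^2 / (2 * real m)))"
    by (simp only: sum.cartesian_product' tau_def snd_conv)
  also have "\<dots> \<le> (\<Sum>k\<in>{1..16*n}. \<Sum>l\<in>{..<L}. 33 * exp (-25/2) * (1/2)^l * (2/3)^r)"
  proof (intro sum_mono)
    fix k l
    have "hcost (((1 + real l / 32) * (5 * sqrt (real n)) * (5/6)^r)^2 / (2 * real m))
        \<le> hcost (25/2 + (25/32) * real l + (25/48) * real r)"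
      by (rule hcost_mono) (use y_lower[OF n m] in auto)
    also have "\<dots> \<le> 33 * exp (-25/2) * (1/2)^l * (2/3)^r" by (rule hcost_rl)
    finally show "hcost (((1 + real l / 32) * (5 * sqrt (real n)) * (5/6)^r)^2 / (2 * real m))
        \<le> 33 * exp (-25/2) * (1/2)^l * (2/3)^r" .
  qed
  also have "\<dots> = real (16 * n) * (\<Sum>l\<in>{..<L}. 33 * exp (-25/2) * (1/2)^l * (2/3)^r)"
    by simp
  also have "\<dots> = real (16 * n) * (33 * exp (-25/2) * (2/3)^r * (\<Sum>l\<in>{..<L}. (1/2)^l))"
  proof -
    have "(\<Sum>l\<in>{..<L}. 33 * exp (-25/2) * (1/2)^l * (2/3::real)^r) = (\<Sum>l\<in>{..<L}. 33 * exp (-25/2) * (2/3::real)^r * (1/2)^l)"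
      by (intro sum.cong refl) (simp add: mult_ac)
    also have "\<dots> = 33 * exp (-25/2) * (2/3)^r * (\<Sum>l\<in>{..<L}. (1/2)^l)"
      by (rule sum_distrib_left[symmetric])
    finally show ?thesis by simp
  qed
  also have "\<dots> \<le> real (16 * n) * (33 * exp (-25/2) * (2/3)^r * 2)"
  proof -
    have "(\<Sum>l\<in>{..<L}. (1/2::real)^l) \<le> 2" by (simp add: sum_gp_strict)
    thus ?thesis by (intro mult_left_mono) auto
  qed
  finally show ?thesis by simp
qed

lemma round_ok:
  fixes n L :: nat
  assumes n: "n \<ge> 1"
  shows "\<And>r m. 100 \<le> real m \<Longrightarrow> real n * (2/3)^Suc r < real m \<Longrightarrow> real m \<le> real n * (2/3)^r \<Longrightarrow>
   (\<forall>c\<in>{1..16*n}\<times>{..<L}. (tau c * (5 * sqrt (real n)) * (5/6)^r)^2 / (2 * real m) \<ge> 2) \<and>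
   (3/2) ^ m * 2 powr (real m / 3)
     < 2 ^ (m - 1) * exp (-2 * (\<Sum>c\<in>{1..16*n}\<times>{..<L}. hcost ((tau c * (5 * sqrt (real n)) * (5/6)^r)^2 / (2 * real m))))"
proof -
  fix r m :: nat
  assume m100: "100 \<le> real m" and lo: "real n * (2/3)^Suc r < real m" and hi: "real m \<le> real n * (2/3)^r"
  have m0: "real m > 0" using m100 by simp
  have part1: "\<forall>c\<in>{1..16*n}\<times>{..<L}. (tau c * (5 * sqrt (real n)) * (5/6)^r)^2 / (2 * real m) \<ge> 2"
  proof
    fix c assume "c \<in> {1..16*n}\<times>{..<L}"
    obtain k l where c: "c = (k, l)" by (cases c)
    have "(tau c * (5 * sqrt (real n)) * (5/6)^r)^2 / (2 * real m) \<ge> 25/2 + (25/32) * real l + (25/48) * real r"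
      using y_lower[OF n m0 hi, of l] by (simp add: tau_def c)
    thus "(tau c * (5 * sqrt (real n)) * (5/6)^r)^2 / (2 * real m) \<ge> 2" by simp
  qed
  define E0 where "E0 = (\<Sum>c\<in>{1..16*n}\<times>{..<L}. hcost ((tau c * (5 * sqrt (real n)) * (5/6)^r)^2 / (2 * real m)))"
  have E0: "E0 \<le> 16 * real n * (66 * exp (-25/2) * (2/3)^r)"
    unfolding E0_def by (rule sum_hcost_bound[OF n m0 hi])
  have nr: "real n * (2/3)^r < 3/2 * real m"
  proof -
    have "real n * (2/3)^r = 3/2 * (real n * (2/3)^Suc r)" by simp
    thus ?thesis using lo by linarith
  qed
  have e125: "exp (-25/2::real) \<le> 1/130000"
    using num3 by (simp add: exp_minus field_simps)
  have "E0 \<le> 1056 * exp (-25/2) * (real n * (2/3)^r)" using E0 by (simp add: mult_ac)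
  also have "\<dots> \<le> 1056 * exp (-25/2) * (3/2 * real m)"
    using nr by (intro mult_left_mono) auto
  also have "\<dots> \<le> 1056 * (1/130000) * (3/2 * real m)"
    using e125 m0 by (intro mult_right_mono) auto
  finally have E0m: "E0 \<le> real m / 80" by simp
  have ln2: "68/100 \<le> ln (2::real)" "ln (2::real) \<le> 1" by (rule ln2_bounds)+
  have ln15: "ln (3/2::real) \<le> 41/100" by (rule ln15_bound)
  have L: "(3/2::real) ^ m * 2 powr (real m / 3) = exp (real m * ln (3/2) + real m / 3 * ln 2)"
  proof -
    have "(3/2::real) ^ m = exp (real m * ln (3/2))" by (simp add: exp_of_nat_mult)
    moreover have "(2::real) powr (real m / 3) = exp (real m / 3 * ln 2)" by (simp add: powr_def mult.commute)
    ultimately show ?thesis by (simp add: exp_add)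
  qed
  have R: "(2::real) ^ (m - 1) * exp (-2 * E0) = exp ((real m - 1) * ln 2 - 2 * E0)"
  proof -
    have e1: "exp (real (m - 1) * ln 2) = (2::real) ^ (m - 1)" by (simp add: exp_of_nat_mult)
    have rm: "real (m - 1) = real m - 1" using m100 by simp
    have "exp ((real m - 1) * ln 2 - 2 * E0) = exp (real (m - 1) * ln 2 + (-2 * E0))" using rm by simp
    also have "\<dots> = exp (real (m - 1) * ln 2) * exp (-2 * E0)" by (rule exp_add)
    finally show ?thesis using e1 by simp
  qed
  have "real m * ln (3/2) + real m / 3 * ln 2 < (real m - 1) * ln 2 - 2 * E0"
  proof -
    have a: "real m * ln (3/2) \<le> real m * (41/100)" using ln15 m0 by (intro mult_left_mono) auto
    have b: "real m * ln 2 \<ge> real m * (68/100)" using ln2 m0 by (intro mult_left_mono) auto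
    have "real m * ln (3/2) + real m / 3 * ln 2 = real m * ln (3/2) + (real m * ln 2) / 3" by simp
    moreover have "(real m - 1) * ln 2 = real m * ln 2 - ln 2" by (simp add: algebra_simps)
    ultimately show ?thesis using a b ln2 E0m m100 by linarith
  qed
  hence "(3/2::real) ^ m * 2 powr (real m / 3) < 2 ^ (m - 1) * exp (-2 * E0)"
    unfolding L R by simp
  thus "(\<forall>c\<in>{1..16*n}\<times>{..<L}. (tau c * (5 * sqrt (real n)) * (5/6)^r)^2 / (2 * real m) \<ge> 2) \<and>
   (3/2) ^ m * 2 powr (real m / 3)
     < 2 ^ (m - 1) * exp (-2 * (\<Sum>c\<in>{1..16*n}\<times>{..<L}. hcost ((tau c * (5 * sqrt (real n)) * (5/6)^r)^2 / (2 * real m))))"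
    using part1 by (simp add: E0_def)
qed

definition Sodd :: "nat \<Rightarrow> nat set" where "Sodd n = {j. odd j \<and> j < 2*n}"

lemma Sodd_finite: "finite (Sodd n)" by (simp add: Sodd_def)

lemma Sodd_card: "card (Sodd n) \<le> n"
proof -
  have "inj_on (\<lambda>j. j div 2) (Sodd n)"
    by (auto simp: inj_on_def Sodd_def elim!: oddE)
  moreover have "(\<lambda>j. j div 2) ` Sodd n \<subseteq> {..<n}" by (auto simp: Sodd_def)
  ultimately have "card (Sodd n) \<le> card {..<n}" by (metis card_inj_on_le finite_lessThan)
  thus ?thesis by simp
qed

definition thk :: "nat \<Rightarrow> nat \<Rightarrow> real" where "thk n k = (2 * real k - 1) * pi / (4 * (16 * real n))"

definition acoef :: "nat \<Rightarrow> nat \<times> nat \<Rightarrow> nat \<Rightarrow> real" where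
  "acoef n c j = (if j < 2*n then (real j / (2 * real n)) ^ snd c * sin (real j * thk n (fst c) + real (snd c) * pi / 2) else 0)"

lemma acoef_bound: "\<bar>acoef n c j\<bar> \<le> 1"
proof (cases "j < 2*n")
  case True
  have "0 \<le> real j / (2 * real n)" by simp
  moreover have "real j / (2 * real n) \<le> 1" using True by (simp add: field_simps)
  ultimately have "(real j / (2 * real n)) ^ snd c \<le> 1" by (rule power_le_one)
  moreover have "\<bar>sin (real j * thk n (fst c) + real (snd c) * pi / 2)\<bar> \<le> 1" by (rule abs_sin_le_one)
  ultimately have "(real j / (2 * real n)) ^ snd c * \<bar>sin (real j * thk n (fst c) + real (snd c) * pi / 2)\<bar> \<le> 1 * 1"
    by (intro mult_mono) auto
  thus ?thesis using True by (simp add: acoef_def abs_mult)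
next
  case False thus ?thesis by (simp add: acoef_def)
qed

lemma herd_family:
  assumes n: "n \<ge> 1" and U: "U \<subseteq> Sodd n"
  shows "\<exists>ch\<in>cols U. \<forall>c\<in>{1..16*n}\<times>{..<L}.
           \<bar>\<Sum>j\<in>U. acoef n c j * ch j\<bar> \<le> 30 * tau c * sqrt (real n) + 100"
proof -
  have finU: "finite U" using U Sodd_finite finite_subset by blast
  have cU: "real (card U) \<le> real n * (2/3)^0"
  proof -
    have "card U \<le> card (Sodd n)" using U by (intro card_mono Sodd_finite)
    thus ?thesis using Sodd_card[of n] by simp
  qed
  have "\<exists>ch\<in>cols U. \<forall>c\<in>{1..16*n}\<times>{..<L}. \<bar>\<Sum>j\<in>U. acoef n c j * ch j\<bar>
          \<le> tau c * (5 * sqrt (real n)) * (5/6)^0 / (1 - 5/6) + 100"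
  proof (rule herdisc_iter[where N = "real n" and \<sigma> = "5/6" and Mb = 100 and \<alpha> = "5 * sqrt (real n)" and \<tau> = tau])
    show "finite ({1..16*n}\<times>{..<L})" by simp
    show "\<forall>c\<in>{1..16*n}\<times>{..<L}. \<forall>j. \<bar>acoef n c j\<bar> \<le> 1" by (simp add: acoef_bound)
    show "\<forall>c\<in>{1..16*n}\<times>{..<L}. 0 < tau c" by (auto simp: tau_def add_pos_nonneg)
    show "0 < 5 * sqrt (real n)" using n by simp
  qed (use round_ok[OF n] finU cU in auto)
  moreover have eq: "tau c * (5 * sqrt (real n)) * (5/6)^0 / (1 - 5/6) + 100 = 30 * tau c * sqrt (real n) + 100" for c
    by simp
  ultimately show ?thesis by (simp only: eq)
qed

lemma deriv_sinsum:
  assumes "finite S"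
  shows "(deriv ^^ l) (\<lambda>\<theta>. \<Sum>j\<in>S. c j * sin (real j * \<theta>)) =
         (\<lambda>\<theta>. \<Sum>j\<in>S. c j * real j ^ l * sin (real j * \<theta> + real l * pi / 2))"
proof (induction l)
  case 0
  show ?case by simp
next
  case (Suc l)
  have "(deriv ^^ Suc l) (\<lambda>\<theta>. \<Sum>j\<in>S. c j * sin (real j * \<theta>)) =
        deriv (\<lambda>\<theta>. \<Sum>j\<in>S. c j * real j ^ l * sin (real j * \<theta> + real l * pi / 2))"
    using Suc.IH by simp
  also have "\<dots> = (\<lambda>\<theta>. \<Sum>j\<in>S. c j * real j ^ Suc l * sin (real j * \<theta> + real (Suc l) * pi / 2))"
  proof
    fix \<theta> :: real
    have "((\<lambda>\<theta>. \<Sum>j\<in>S. c j * real j ^ l * sin (real j * \<theta> + real l * pi / 2)) has_real_derivative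
           (\<Sum>j\<in>S. c j * real j ^ l * (cos (real j * \<theta> + real l * pi / 2) * (real j * 1 + 0)))) (at \<theta>)"
      by (auto intro!: derivative_eq_intros sum.cong simp: mult_ac)
    hence "deriv (\<lambda>\<theta>. \<Sum>j\<in>S. c j * real j ^ l * sin (real j * \<theta> + real l * pi / 2)) \<theta> =
           (\<Sum>j\<in>S. c j * real j ^ l * (cos (real j * \<theta> + real l * pi / 2) * (real j * 1 + 0)))"
      by (rule DERIV_imp_deriv)
    also have "\<dots> = (\<Sum>j\<in>S. c j * real j ^ Suc l * sin (real j * \<theta> + real (Suc l) * pi / 2))"
    proof (intro sum.cong refl)
      fix j
      have "sin (real j * \<theta> + real (Suc l) * pi / 2) = sin ((real j * \<theta> + real l * pi / 2) + pi / 2)"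
        by (simp add: algebra_simps add_divide_distrib)
      also have "\<dots> = cos (real j * \<theta> + real l * pi / 2)" by (simp add: sin_add)
      finally show "c j * real j ^ l * (cos (real j * \<theta> + real l * pi / 2) * (real j * 1 + 0)) =
            c j * real j ^ Suc l * sin (real j * \<theta> + real (Suc l) * pi / 2)" by simp
    qed
    finally show "deriv (\<lambda>\<theta>. \<Sum>j\<in>S. c j * real j ^ l * sin (real j * \<theta> + real l * pi / 2)) \<theta> =
           (\<Sum>j\<in>S. c j * real j ^ Suc l * sin (real j * \<theta> + real (Suc l) * pi / 2))" .
  qed
  finally show ?case .
qed

lemma So_eq: "So n = Sodd n" by (simp add: So_def Sodd_def)

lemma two_pow_ge: "2 * n \<le> (2::nat) ^ n"
proof (induction n)
  case 0 show ?case by simp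
next
  case (Suc n)
  show ?case
  proof (cases "n = 0")
    case True thus ?thesis by simp
  next
    case False
    hence "(2::nat) \<le> 2 ^ n" using power_increasing[of 1 n "2::nat"] by simp
    thus ?thesis using Suc.IH by simp
  qed
qed

theorem lemma5p4:
  shows "\<exists>N0::nat. \<forall>n\<ge>N0. \<forall>(t::int) (\<I>::real set set) (\<alpha>::real set \<Rightarrow> real).
     n > 0 \<and> odd t \<and> 2 powr (-43) < gamma n t \<and> gamma n t \<le> 2 powr (-40) \<and>
     suitable n t \<I> \<and> well_separated n t \<I> \<and> symmetric_colouring \<I> \<alpha> \<and>
     (\<forall>j\<in>So n. \<bar>eps_hat n \<I> \<alpha> j\<bar> \<le> 1)
     \<longrightarrow> (\<exists>\<epsilon>::nat \<Rightarrow> real. (\<forall>j\<in>So n. \<epsilon> j \<in> {-1, 1}) \<and>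
          (\<forall>k\<in>{1..16*n}. \<forall>l::nat.
             let \<theta>k = (2*real k - 1) * pi / (4 * (16 * real n)) in
             \<bar>(deriv ^^ l) (s_o n \<epsilon>) \<theta>k - (deriv ^^ l) (s_hat n \<I> \<alpha>) \<theta>k\<bar>
               \<le> (65 + 2 * real l) * sqrt n * (2 * real n) ^ l))"
proof (intro exI[of _ 1681] allI impI)
  fix n :: nat and t :: int and \<I> :: "real set set" and \<alpha> :: "real set \<Rightarrow> real"
  assume n: "n \<ge> 1681"
  assume H: "n > 0 \<and> odd t \<and> 2 powr (-43) < gamma n t \<and> gamma n t \<le> 2 powr (-40) \<and>
     suitable n t \<I> \<and> well_separated n t \<I> \<and> symmetric_colouring \<I> \<alpha> \<and>
     (\<forall>j\<in>So n. \<bar>eps_hat n \<I> \<alpha> j\<bar> \<le> 1)"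
  define e where "e = eps_hat n \<I> \<alpha>"
  define J where "J = Sodd n"
  define L where "L = nat \<lceil>sqrt (real n)\<rceil>"
  define C where "C = {1..16*n} \<times> {..<L}"
  define D where "D c = 30 * tau c * sqrt (real n) + 100" for c
  have eb: "\<forall>j\<in>J. \<bar>e j\<bar> \<le> 1" using H by (simp add: e_def J_def So_eq)
  have n1: "n \<ge> 1" using n by simp
  have finJ: "finite J" by (simp add: J_def Sodd_finite)
  have cardJ: "card J \<le> n" by (simp add: J_def Sodd_card)
  have Jlt: "j < 2 * n" if "j \<in> J" for j using that by (simp add: J_def Sodd_def)
  have herd: "\<And>U. U \<subseteq> J \<Longrightarrow> \<exists>ch\<in>cols U. \<forall>c\<in>C. \<bar>\<Sum>j\<in>U. acoef n c j * ch j\<bar> \<le> D c"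
    using herd_family[OF n1] by (simp add: C_def D_def J_def)
  define k where "k j = nat \<lfloor>2^n * (1 + e j) / 2\<rfloor>" for j
  have kprop: "real (k j) \<le> 2^n * (1 + e j) / 2 \<and> 2^n * (1 + e j) / 2 < real (k j) + 1" if j: "j \<in> J" for j
  proof -
    have "0 \<le> 1 + e j" using eb j by (auto simp: abs_le_iff)
    hence "0 \<le> 2^n * (1 + e j) / 2" by simp
    hence "real (k j) = real_of_int \<lfloor>2^n * (1 + e j) / 2\<rfloor>" by (simp add: k_def)
    thus ?thesis by linarith
  qed
  have kle: "\<forall>j\<in>J. k j \<le> 2^n"
  proof
    fix j assume j: "j \<in> J"
    have "1 + e j \<le> 2" using eb j by (auto simp: abs_le_iff)
    hence "2^n * (1 + e j) / 2 \<le> 2^n" by simp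
    hence "real (k j) \<le> 2^n" using kprop[OF j] by linarith
    thus "k j \<le> 2^n" by (metis of_nat_le_iff of_nat_numeral of_nat_power)
  qed
  obtain \<epsilon> where \<epsilon>: "\<forall>j\<in>J. \<epsilon> j \<in> {-1,1}"
    "\<forall>c\<in>C. \<bar>\<Sum>j\<in>J. (\<epsilon> j - (-1 + 2 * real (k j) / 2^n)) * acoef n c j\<bar> \<le> 2 * D c * (1 - 1/2^n)"
    using lsv[where J = J and C = C and a = "acoef n" and D = D, OF finJ herd, of n] kle by blast
  define x where "x j = -1 + 2 * real (k j) / 2^n" for j
  have xclose: "\<bar>x j - e j\<bar> \<le> 2 / 2^n" if j: "j \<in> J" for j
  proof -
    define w where "w = real (k j) - 2^n * (1 + e j) / 2"
    have eq: "x j - e j = (2 * w) / 2^n"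
      by (simp add: x_def w_def field_simps)
    have "\<bar>w\<bar> \<le> 1" using kprop[OF j] unfolding w_def by linarith
    hence "\<bar>2 * w\<bar> \<le> 2" by simp
    hence "\<bar>2 * w\<bar> / 2^n \<le> 2 / 2^n" by (intro divide_right_mono) auto
    thus ?thesis unfolding eq by (simp add: abs_divide)
  qed
  have two: "2 * real n \<le> 2^n"
  proof -
    have "real (2 * n) \<le> real (2 ^ n)" using two_pow_ge[of n] by (simp only: of_nat_le_iff)
    thus ?thesis by simp
  qed
  have Dnn: "D c \<ge> 0" if "c \<in> C" for c using that by (auto simp: D_def tau_def C_def)
  have main: "\<bar>\<Sum>j\<in>J. (\<epsilon> j - e j) * acoef n c j\<bar> \<le> 2 * D c + 1" if c: "c \<in> C" for c
  proof -
    have "(\<Sum>j\<in>J. (\<epsilon> j - e j) * acoef n c j) = (\<Sum>j\<in>J. (\<epsilon> j - x j) * acoef n c j) + (\<Sum>j\<in>J. (x j - e j) * acoef n c j)"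
      by (simp add: sum.distrib[symmetric] algebra_simps)
    moreover have "\<bar>\<Sum>j\<in>J. (\<epsilon> j - x j) * acoef n c j\<bar> \<le> 2 * D c"
    proof -
      have "\<bar>\<Sum>j\<in>J. (\<epsilon> j - x j) * acoef n c j\<bar> \<le> 2 * D c * (1 - 1/2^n)" using \<epsilon>(2) c by (simp add: x_def)
      also have "\<dots> \<le> 2 * D c" using Dnn[OF c] by (simp add: mult_left_le)
      finally show ?thesis .
    qed
    moreover have "\<bar>\<Sum>j\<in>J. (x j - e j) * acoef n c j\<bar> \<le> 1"
    proof -
      have "\<bar>\<Sum>j\<in>J. (x j - e j) * acoef n c j\<bar> \<le> (\<Sum>j\<in>J. \<bar>(x j - e j) * acoef n c j\<bar>)" by (rule sum_abs)
      also have "\<dots> \<le> (\<Sum>j\<in>J. 2 / 2^n)"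
      proof (intro sum_mono)
        fix j assume j: "j \<in> J"
        have "\<bar>(x j - e j) * acoef n c j\<bar> = \<bar>x j - e j\<bar> * \<bar>acoef n c j\<bar>" by (simp add: abs_mult)
        also have "\<dots> \<le> (2 / 2^n) * 1" using xclose[OF j] acoef_bound by (intro mult_mono) auto
        finally show "\<bar>(x j - e j) * acoef n c j\<bar> \<le> 2 / 2^n" by simp
      qed
      also have "\<dots> = real (card J) * (2 / 2^n)" by simp
      also have "\<dots> \<le> real n * (2 / 2^n)" using cardJ by (intro mult_right_mono) auto
      also have "\<dots> \<le> 1" using two by (simp add: field_simps)
      finally show ?thesis .
    qed
    ultimately show ?thesis by linarith
  qed
  have triv: "\<bar>\<Sum>j\<in>J. (\<epsilon> j - e j) * acoef n c j\<bar> \<le> 2 * real n" for c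
  proof -
    have "\<bar>\<Sum>j\<in>J. (\<epsilon> j - e j) * acoef n c j\<bar> \<le> (\<Sum>j\<in>J. \<bar>(\<epsilon> j - e j) * acoef n c j\<bar>)" by (rule sum_abs)
    also have "\<dots> \<le> (\<Sum>j\<in>J. 2)"
    proof (intro sum_mono)
      fix j assume j: "j \<in> J"
      have "\<bar>\<epsilon> j\<bar> = 1" using \<epsilon>(1) j by auto
      moreover have "\<bar>e j\<bar> \<le> 1" using eb j by auto
      ultimately have "\<bar>\<epsilon> j - e j\<bar> \<le> 2" by linarith
      hence "\<bar>\<epsilon> j - e j\<bar> * \<bar>acoef n c j\<bar> \<le> 2 * 1" using acoef_bound by (intro mult_mono) auto
      thus "\<bar>(\<epsilon> j - e j) * acoef n c j\<bar> \<le> 2" by (simp add: abs_mult)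
    qed
    also have "\<dots> = 2 * real (card J)" by simp
    also have "\<dots> \<le> 2 * real n" using cardJ by simp
    finally show ?thesis .
  qed
  have sq41: "sqrt (real n) \<ge> 41"
  proof -
    have b: "sqrt (1681::real) \<le> sqrt (real n)" using n by (simp only: real_sqrt_le_iff)
    have a: "sqrt (1681::real) = 41" using real_sqrt_unique[of 41 1681] by simp
    show ?thesis using a b by simp
  qed
  have so: "s_o n \<epsilon> = (\<lambda>\<theta>. \<Sum>j\<in>J. \<epsilon> j * sin (real j * \<theta>))" by (rule ext) (simp add: s_o_def J_def So_eq)
  have sh: "s_hat n \<I> \<alpha> = (\<lambda>\<theta>. \<Sum>j\<in>J. e j * sin (real j * \<theta>))" by (rule ext) (simp add: s_hat_def J_def So_eq e_def)
  show "\<exists>\<epsilon>::nat \<Rightarrow> real. (\<forall>j\<in>So n. \<epsilon> j \<in> {-1, 1}) \<and>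
          (\<forall>k\<in>{1..16*n}. \<forall>l::nat.
             let \<theta>k = (2*real k - 1) * pi / (4 * (16 * real n)) in
             \<bar>(deriv ^^ l) (s_o n \<epsilon>) \<theta>k - (deriv ^^ l) (s_hat n \<I> \<alpha>) \<theta>k\<bar>
               \<le> (65 + 2 * real l) * sqrt n * (2 * real n) ^ l)"
  proof (intro exI[of _ \<epsilon>] conjI ballI allI)
    show "\<And>j. j \<in> So n \<Longrightarrow> \<epsilon> j \<in> {-1, 1}" using \<epsilon>(1) by (simp add: J_def So_eq)
    fix kk l assume kk: "kk \<in> {1..16*n}"
    define \<theta> where "\<theta> = (2*real kk - 1) * pi / (4 * (16 * real n))"
    have th: "\<theta> = thk n kk" by (simp add: \<theta>_def thk_def)
    have diff: "(deriv ^^ l) (s_o n \<epsilon>) \<theta> - (deriv ^^ l) (s_hat n \<I> \<alpha>) \<theta>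
        = (2 * real n) ^ l * (\<Sum>j\<in>J. (\<epsilon> j - e j) * acoef n (kk, l) j)"
    proof -
      have "(deriv ^^ l) (s_o n \<epsilon>) \<theta> - (deriv ^^ l) (s_hat n \<I> \<alpha>) \<theta>
          = (\<Sum>j\<in>J. \<epsilon> j * real j ^ l * sin (real j * \<theta> + real l * pi / 2)) -
            (\<Sum>j\<in>J. e j * real j ^ l * sin (real j * \<theta> + real l * pi / 2))"
        unfolding so sh deriv_sinsum[OF finJ] by simp
      also have "\<dots> = (\<Sum>j\<in>J. (\<epsilon> j - e j) * (real j ^ l * sin (real j * \<theta> + real l * pi / 2)))"
        by (simp add: sum_subtractf[symmetric] algebra_simps)
      also have "\<dots> = (\<Sum>j\<in>J. (2 * real n) ^ l * ((\<epsilon> j - e j) * acoef n (kk, l) j))"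
      proof (intro sum.cong refl)
        fix j assume j: "j \<in> J"
        have "(2 * real n) ^ l * (real j / (2 * real n)) ^ l = real j ^ l"
          using n by (simp add: power_divide)
        thus "(\<epsilon> j - e j) * (real j ^ l * sin (real j * \<theta> + real l * pi / 2)) =
              (2 * real n) ^ l * ((\<epsilon> j - e j) * acoef n (kk, l) j)"
          using Jlt[OF j] by (simp add: acoef_def th mult_ac)
      qed
      also have "\<dots> = (2 * real n) ^ l * (\<Sum>j\<in>J. (\<epsilon> j - e j) * acoef n (kk, l) j)"
        by (simp add: sum_distrib_left)
      finally show ?thesis .
    qed
    have bnd: "\<bar>\<Sum>j\<in>J. (\<epsilon> j - e j) * acoef n (kk, l) j\<bar> \<le> (65 + 2 * real l) * sqrt n"
    proof (cases "l < L")
      case True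
      hence c: "(kk, l) \<in> C" using kk by (simp add: C_def)
      have "\<bar>\<Sum>j\<in>J. (\<epsilon> j - e j) * acoef n (kk, l) j\<bar> \<le> 2 * D (kk, l) + 1" by (rule main[OF c])
      also have "\<dots> = (60 + 15 * real l / 8) * sqrt n + 201" by (simp add: D_def tau_def field_simps)
      also have "\<dots> \<le> (65 + 2 * real l) * sqrt n"
      proof -
        have "201 \<le> 5 * sqrt n" using sq41 by simp
        moreover have "(15 * real l / 8) * sqrt n \<le> (2 * real l) * sqrt n" by (intro mult_right_mono) auto
        moreover have "(60 + 15 * real l / 8) * sqrt n = 60 * sqrt n + (15 * real l / 8) * sqrt n"
          by (simp add: algebra_simps)
        moreover have "(65 + 2 * real l) * sqrt n = 65 * sqrt n + (2 * real l) * sqrt n"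
          by (simp add: algebra_simps)
        ultimately show ?thesis by linarith
      qed
      finally show ?thesis .
    next
      case False
      hence "real l \<ge> sqrt n" unfolding L_def by linarith
      hence "2 * real n \<le> 2 * real l * sqrt n"
        using real_sqrt_pow2[of "real n"] mult_right_mono[of "sqrt n" "real l" "sqrt n"]
        by (simp add: power2_eq_square)
      also have "\<dots> \<le> (65 + 2 * real l) * sqrt n" by (intro mult_right_mono) auto
      finally show ?thesis using triv[of "(kk, l)"] by linarith
    qed
    have "\<bar>(deriv ^^ l) (s_o n \<epsilon>) \<theta> - (deriv ^^ l) (s_hat n \<I> \<alpha>) \<theta>\<bar> \<le> (65 + 2 * real l) * sqrt n * (2 * real n) ^ l"
      unfolding diff using bnd by (simp add: abs_mult mult_left_mono mult.commute)
    thus "let \<theta>k = (2*real kk - 1) * pi / (4 * (16 * real n)) in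
             \<bar>(deriv ^^ l) (s_o n \<epsilon>) \<theta>k - (deriv ^^ l) (s_hat n \<I> \<alpha>) \<theta>k\<bar>
               \<le> (65 + 2 * real l) * sqrt n * (2 * real n) ^ l" by (simp add: \<theta>_def Let_def)
  qed
qed

end
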